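(* Let $V$ be the $\mathbb Z$-representation of the dual star quiver $\mathsf S^*_4$ (central vertex $v_1$, arrows $v_2\to v_1$, $v_3\to v_1$, $v_4\to v_1$) in which $v_1$ is represented by $\mathbb Z^2$, $v_2,v_3,v_4$ by $\mathbb Z$, and the three arrows by the maps $\mathbb Z\to\mathbb Z^2$ given by $x\mapsto(x,x)$, $x\mapsto(0,x)$ and $x\mapsto(x,0)$ respectively. Then for every compact discrete valuation ring $\mathfrak o$ with residue field cardinality $q$, writing $t=q^{-s}$, $$\zeta_{V(\mathfrak o)}(s)=\frac{1+2t^3-2t^4-t^7}{(1-t)^3(1-t^3)(1-t^5)(1-qt^4)}.$$
   Context: For a representation $V=(\mathcal L_\iota,f_\phi)$ of a quiver over a ring $R$ and an $R$-algebra $S$, $V(S)=(\mathcal L_\iota\otimes S,f_\phi\otimes\mathrm{id})$. Subrepresentations are tuples of submodules $\Lambda_\iota\le\mathcal L_\iota$ with $f_\phi(\Lambda_{\mathrm{tail}(\phi)})\subseteq\Lambda_{\mathrm{head}(\phi)}$; $\zeta_V(s)=\sum_{V'}\prod_\iota|\mathcal L_\iota:\Lambda_\iota|^{-s}$ over finite-index subrepresentations. *)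

theory Defs
  imports "HOL-Analysis.Analysis" "HOL-Library.Product_Plus"
begin

definition dvr_uniformizer :: "'a::idom \<Rightarrow> bool" where
  "dvr_uniformizer p \<longleftrightarrow> p \<noteq> 0 \<and> \<not> p dvd 1 \<and>
     (\<forall>x. x \<noteq> 0 \<longrightarrow> (\<exists>u n. u dvd 1 \<and> x = u * p ^ n))"

definition val_ball :: "'a::idom \<Rightarrow> 'a \<Rightarrow> nat \<Rightarrow> 'a set" where
  "val_ball p x k = {y. p ^ k dvd (y - x)}"

definition val_compact :: "'a::idom \<Rightarrow> bool" where
  "val_compact p \<longleftrightarrow> (\<forall>C. (\<forall>B\<in>C. \<exists>x k. B = val_ball p x k) \<and> \<Union>C = UNIV
      \<longrightarrow> (\<exists>F\<subseteq>C. finite F \<and> \<Union>F = UNIV))"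

definition compact_dvr_uniformizer :: "'a::idom \<Rightarrow> bool" where
  "compact_dvr_uniformizer p \<longleftrightarrow> dvr_uniformizer p \<and> val_compact p"

definition residue_card :: "'a::idom \<Rightarrow> nat" where
  "residue_card p = card (range (\<lambda>x. {y. p dvd (y - x)}))"

definition cosets_of :: "'b::ab_group_add set \<Rightarrow> 'b set set" where
  "cosets_of H = range (\<lambda>x. {y. y - x \<in> H})"

definition finite_index :: "'b::ab_group_add set \<Rightarrow> bool" where
  "finite_index H \<longleftrightarrow> finite (cosets_of H)"

definition sg_index :: "'b::ab_group_add set \<Rightarrow> nat" where
  "sg_index H = card (cosets_of H)"

definition submod1 :: "'a::idom set \<Rightarrow> bool" where
  "submod1 L \<longleftrightarrow> 0 \<in> L \<and> (\<forall>x\<in>L. \<forall>y\<in>L. x + y \<in> L) \<and> (\<forall>r. \<forall>x\<in>L. r * x \<in> L)"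

definition submod2 :: "('a::idom \<times> 'a) set \<Rightarrow> bool" where
  "submod2 L \<longleftrightarrow> 0 \<in> L \<and> (\<forall>x\<in>L. \<forall>y\<in>L. x + y \<in> L) \<and>
     (\<forall>r a b. (a, b) \<in> L \<longrightarrow> (r * a, r * b) \<in> L)"

text \<open>Finite-index subrepresentations of V(o) for the dual star quiver S*_4:
  L1 \<le> o^2 at v1, L2, L3, L4 \<le> o at v2, v3, v4, arrows
  x \<mapsto> (x,x), x \<mapsto> (0,x), x \<mapsto> (x,0).\<close>
definition subreps_V :: "(('a::idom \<times> 'a) set \<times> 'a set \<times> 'a set \<times> 'a set) set" where
  "subreps_V = {(L1, L2, L3, L4).
      submod2 L1 \<and> submod1 L2 \<and> submod1 L3 \<and> submod1 L4 \<and>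
      finite_index L1 \<and> finite_index L2 \<and> finite_index L3 \<and> finite_index L4 \<and>
      (\<lambda>x. (x, x)) ` L2 \<subseteq> L1 \<and> (\<lambda>x. (0, x)) ` L3 \<subseteq> L1 \<and> (\<lambda>x. (x, 0)) ` L4 \<subseteq> L1}"

definition subrep_index :: "('a::idom \<times> 'a) set \<times> 'a set \<times> 'a set \<times> 'a set \<Rightarrow> nat" where
  "subrep_index W = (case W of (L1, L2, L3, L4) \<Rightarrow>
      sg_index L1 * sg_index L2 * sg_index L3 * sg_index L4)"

end

theory Submission
  imports Defs
begin


lemma has_sum_geo:
  fixes z :: complex assumes "norm z < 1"
  shows "((\<lambda>n. z ^ n) has_sum 1 / (1 - z)) UNIV"
proof (rule norm_summable_imp_has_sum)
  show "summable (\<lambda>n. norm (z ^ n))" using assms by (simp add: norm_power summable_geometric)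
  show "(\<lambda>n. z ^ n) sums (1 / (1 - z))" using geometric_sums[OF assms] by simp
qed

lemma has_sum_prod_mult:
  fixes f :: "'i \<Rightarrow> complex" and g :: "'j \<Rightarrow> complex"
  assumes f: "(f has_sum a) A" and g: "(g has_sum b) B"
  shows "((\<lambda>(x, y). f x * g y) has_sum (a * b)) (A \<times> B)"
proof -
  have fa: "(\<lambda>x. norm (f x)) summable_on A" using f summable_on_iff_abs_summable_on_complex has_sum_imp_summable by blast
  have ga: "(\<lambda>x. norm (g x)) summable_on B" using g summable_on_iff_abs_summable_on_complex has_sum_imp_summable by blast
  have "(\<lambda>z. norm ((\<lambda>(x, y). f x * g y) z)) summable_on Sigma A (\<lambda>_. B)"
  proof (rule Infinite_Sum.abs_summable_on_Sigma_iff[THEN iffD2], intro conjI ballI)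
    fix x assume "x \<in> A"
    have "(\<lambda>y. norm (f x) * norm (g y)) summable_on B" using ga by (rule summable_on_cmult_right)
    then show "(\<lambda>y. norm (case (x, y) of (x, y) \<Rightarrow> f x * g y)) summable_on B" by (simp add: norm_mult)
  next
    have "(\<lambda>x. norm (f x) * (\<Sum>\<^sub>\<infinity>y\<in>B. norm (g y))) summable_on A" using fa by (rule summable_on_cmult_left)
    moreover have "norm (\<Sum>\<^sub>\<infinity>y\<in>B. norm (case (x, y) of (x, y) \<Rightarrow> f x * g y)) = norm (f x) * (\<Sum>\<^sub>\<infinity>y\<in>B. norm (g y))" for x
      by (simp add: norm_mult infsum_cmult_right' infsum_nonneg)
    ultimately show "(\<lambda>x. norm (\<Sum>\<^sub>\<infinity>y\<in>B. norm (case (x, y) of (x, y) \<Rightarrow> f x * g y))) summable_on A" by simp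
  qed
  then have sm: "(\<lambda>(x, y). f x * g y) summable_on Sigma A (\<lambda>_. B)" by (rule abs_summable_summable)
  show ?thesis
  proof (rule has_sum_SigmaI[OF _ _ sm])
    fix x assume "x \<in> A"
    show "((\<lambda>y. case (x, y) of (x, y) \<Rightarrow> f x * g y) has_sum f x * b) B"
      using has_sum_cmult_right[OF g] by simp
  next
    show "((\<lambda>x. f x * b) has_sum a * b) A" using f by (rule has_sum_cmult_left)
  qed
qed

lemma has_sum_split:
  fixes f :: "'i \<Rightarrow> complex"
  assumes "(f has_sum a) {x\<in>A. P x}" "(f has_sum b) {x\<in>A. \<not> P x}"
  shows "(f has_sum (a + b)) A"
proof -
  have "(f has_sum (a + b)) ({x\<in>A. P x} \<union> {x\<in>A. \<not> P x})"
    by (rule has_sum_Un_disjoint[OF assms]) auto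
  moreover have "{x\<in>A. P x} \<union> {x\<in>A. \<not> P x} = A" by auto
  ultimately show ?thesis by simp
qed


lemma coset_bij:
  fixes H :: "'b::ab_group_add set" and r :: "'i \<Rightarrow> 'b"
  assumes H0: "0 \<in> H" and Hadd: "\<And>x y. x \<in> H \<Longrightarrow> y \<in> H \<Longrightarrow> x + y \<in> H"
    and Hneg: "\<And>x. x \<in> H \<Longrightarrow> - x \<in> H"
    and cover: "\<And>x. \<exists>i\<in>A. x - r i \<in> H"
    and uniq: "\<And>i j. i \<in> A \<Longrightarrow> j \<in> A \<Longrightarrow> r i - r j \<in> H \<Longrightarrow> i = j"
  shows "bij_betw (\<lambda>i. {y. y - r i \<in> H}) A (cosets_of H)"
proof (rule bij_betwI')
  fix i j assume ij: "i \<in> A" "j \<in> A"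
  show "({y. y - r i \<in> H} = {y. y - r j \<in> H}) = (i = j)"
  proof
    assume "{y. y - r i \<in> H} = {y. y - r j \<in> H}"
    then have "r i \<in> {y. y - r j \<in> H}" using H0 by auto
    then show "i = j" using uniq ij by auto
  qed simp
next
  fix i assume "i \<in> A" then show "{y. y - r i \<in> H} \<in> cosets_of H"
    unfolding cosets_of_def by auto
next
  fix C assume "C \<in> cosets_of H"
  then obtain x where C: "C = {y. y - x \<in> H}" unfolding cosets_of_def by auto
  obtain i where i: "i \<in> A" "x - r i \<in> H" using cover by blast
  have "C = {y. y - r i \<in> H}"
  proof safe
    fix y assume "y \<in> C"
    then have "y - x \<in> H" using C by simp
    then have "(y - x) + (x - r i) \<in> H" using i(2) by (rule Hadd)
    then show "y - r i \<in> H" by (simp add: algebra_simps)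
  next
    fix y assume "y - r i \<in> H"
    moreover have "- (x - r i) \<in> H" using i(2) by (rule Hneg)
    ultimately have "(y - r i) + (- (x - r i)) \<in> H" by (rule Hadd)
    then show "y \<in> C" using C by (simp add: algebra_simps)
  qed
  then show "\<exists>i\<in>A. C = {y. y - r i \<in> H}" using i by blast
qed

lemma dvd_cancel_idom:
  fixes a b c :: "'a::idom"
  assumes "a \<noteq> 0" shows "a * b dvd a * c \<longleftrightarrow> b dvd c"
proof
  assume "a * b dvd a * c"
  then obtain k where "a * c = a * b * k" unfolding dvd_def by blast
  then have "a * c = a * (b * k)" by (simp add: mult.assoc)
  then have "c = b * k" using assms by simp
  then show "b dvd c" by simp
qed simp

locale cdvr =
  fixes p :: "'a::idom"
  assumes dvr: "dvr_uniformizer p" and cpt: "val_compact p"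
begin

lemma p_nz: "p \<noteq> 0" and p_nunit: "\<not> p dvd 1"
  and decomp: "x \<noteq> 0 \<Longrightarrow> \<exists>u n. u dvd 1 \<and> x = u * p ^ n"
  using dvr unfolding dvr_uniformizer_def by auto

lemma pow_dvd_pow_iff: "p ^ m dvd p ^ n \<longleftrightarrow> m \<le> n"
proof
  assume h: "p ^ m dvd p ^ n"
  show "m \<le> n"
  proof (rule ccontr)
    assume "\<not> m \<le> n"
    then have "p ^ m = p ^ n * p ^ (m - n)" by (simp add: power_add[symmetric])
    with h have h2: "p ^ n * p ^ (m - n) dvd p ^ n * 1" by simp
    have nz: "p ^ n \<noteq> 0" using p_nz by simp
    have "p ^ (m - n) dvd 1" using h2 dvd_cancel_idom[OF nz] by simp
    moreover have "p dvd p ^ (m - n)" using \<open>\<not> m \<le> n\<close> by (simp add: dvd_power)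
    ultimately show False using p_nunit by (metis dvd_trans)
  qed
qed (rule le_imp_power_dvd)

lemma unit_if_ndvd: assumes "\<not> p dvd x" shows "x dvd 1"
proof -
  have "x \<noteq> 0" using assms by auto
  then obtain u n where u: "u dvd 1" "x = u * p ^ n" using decomp by blast
  have "n = 0"
  proof (rule ccontr)
    assume "n \<noteq> 0"
    then have "p dvd p ^ n" by (simp add: dvd_power)
    then have "p dvd x" using u by simp
    then show False using assms by simp
  qed
  then show ?thesis using u by simp
qed

lemma dvd_unit_mult_iff: assumes "\<not> p dvd u" shows "a dvd u * x \<longleftrightarrow> a dvd x"
proof
  obtain w where w: "1 = u * w" using unit_if_ndvd[OF assms] unfolding dvd_def by blast
  assume "a dvd u * x"
  then have "a dvd w * (u * x)" by simp
  also have "w * (u * x) = x" using w by (simp add: algebra_simps)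
  finally show "a dvd x" .
qed simp

lemma pow_dvd_mono: "p ^ k dvd x \<Longrightarrow> j \<le> k \<Longrightarrow> p ^ j dvd x"
  using le_imp_power_dvd dvd_trans by blast

lemma p_ndvd_1_minus: "0 < d \<Longrightarrow> \<not> p dvd (1 - p ^ d)"
proof
  assume "0 < d" "p dvd 1 - p ^ d"
  moreover have "p dvd p ^ d" using \<open>0 < d\<close> by (simp add: dvd_power)
  ultimately have "p dvd (1 - p ^ d) + p ^ d" by (intro dvd_add)
  then show False using p_nunit by simp
qed

definition I :: "nat \<Rightarrow> 'a set" where "I k = {x. p ^ k dvd x}"

lemma I_inj: "I j = I k \<Longrightarrow> j = k"
proof -
  assume h: "I j = I k"
  have "p ^ k \<in> I k" "p ^ j \<in> I j" by (simp_all add: I_def)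
  then have "p ^ k \<in> I j" "p ^ j \<in> I k" using h by simp_all
  then have "p ^ j dvd p ^ k" "p ^ k dvd p ^ j" by (simp_all add: I_def)
  then show "j = k" unfolding pow_dvd_pow_iff by simp
qed

lemma ideal_class:
  assumes L: "submod1 L" and nz: "L \<noteq> {0}"
  shows "\<exists>k. L = I k"
proof -
  have unitmul: "p ^ n \<in> L" if "u dvd 1" "u * p ^ n \<in> L" for u n
  proof -
    obtain w where "1 = u * w" using \<open>u dvd 1\<close> unfolding dvd_def by blast
    then have "p ^ n = w * (u * p ^ n)" by (simp add: algebra_simps)
    then show ?thesis using L \<open>u * p ^ n \<in> L\<close> unfolding submod1_def by metis
  qed
  have ex: "\<exists>n. p ^ n \<in> L"
  proof -
    obtain x where "x \<in> L" "x \<noteq> 0" using nz L unfolding submod1_def by auto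
    then obtain u n where "u dvd 1" "x = u * p ^ n" using decomp by blast
    then show ?thesis using unitmul \<open>x \<in> L\<close> by blast
  qed
  define k where "k = (LEAST n. p ^ n \<in> L)"
  have k: "p ^ k \<in> L" unfolding k_def using ex by (rule LeastI_ex)
  have "L = I k"
  proof safe
    fix y assume "y \<in> L"
    show "y \<in> I k"
    proof (cases "y = 0")
      case True then show ?thesis by (simp add: I_def)
    next
      case False
      then obtain u n where u: "u dvd 1" "y = u * p ^ n" using decomp by blast
      then have "p ^ n \<in> L" using unitmul \<open>y \<in> L\<close> by blast
      then have "k \<le> n" unfolding k_def by (rule Least_le)
      then show ?thesis using u by (simp add: I_def le_imp_power_dvd)
    qed
  next
    fix y assume "y \<in> I k"
    then obtain r where "y = p ^ k * r" by (auto simp: I_def elim: dvdE)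
    then show "y \<in> L" using k L unfolding submod1_def by (metis mult.commute)
  qed
  then show ?thesis by blast
qed

lemma submod1_I: "submod1 (I k)"
  unfolding submod1_def I_def by auto

lemma pow_inj: "inj (\<lambda>n. p ^ n)"
proof (rule injI)
  fix m n assume "p ^ m = p ^ n"
  then have "p ^ m dvd p ^ n" "p ^ n dvd p ^ m" by auto
  then show "m = n" unfolding pow_dvd_pow_iff by simp
qed

lemma infinite_UNIV_a: "infinite (UNIV :: 'a set)"
proof
  assume "finite (UNIV :: 'a set)"
  then have "finite (range (\<lambda>n. p ^ n))" by (rule finite_subset[rotated]) simp
  then have "finite (UNIV :: nat set)" using pow_inj by (rule finite_imageD)
  then show False by simp
qed

lemma finite_index_nz:
  fixes L :: "'a set"
  assumes "finite_index L" shows "L \<noteq> {0}"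
proof
  assume "L = {0}"
  then have "cosets_of L = range (\<lambda>x. {x})" unfolding cosets_of_def by auto
  moreover have "infinite (range (\<lambda>x::'a. {x}))"
  proof
    assume "finite (range (\<lambda>x::'a. {x}))"
    then have "finite (UNIV :: 'a set)" using inj_singleton by (rule finite_imageD)
    then show False using infinite_UNIV_a by simp
  qed
  moreover have "finite (cosets_of L)" using assms unfolding finite_index_def .
  ultimately show False by (simp only:)
qed

end


lemma dvd_diff_trans: fixes a :: "'b::comm_ring_1"
  shows "a dvd y - x \<Longrightarrow> a dvd x - z \<Longrightarrow> a dvd y - z"
  by (metis diff_add_cancel diff_diff_eq2 dvd_add)

lemma dvd_diff_sym: fixes a :: "'b::comm_ring_1"
  shows "a dvd x - y \<Longrightarrow> a dvd y - x"
  by (metis dvd_minus_iff minus_diff_eq)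

context cdvr
begin

definition Res :: "'a set set" where "Res = range (\<lambda>x. {y. p dvd (y - x)})"

lemma finite_Res: "finite Res"
proof -
  define C where "C = range (\<lambda>x. val_ball p x 1)"
  have h1: "\<forall>B\<in>C. \<exists>x k. B = val_ball p x k" unfolding C_def by blast
  have h2: "\<Union>C = UNIV"
  proof (rule set_eqI)
    fix y have "y \<in> val_ball p y 1" by (simp add: val_ball_def)
    then show "y \<in> \<Union>C \<longleftrightarrow> y \<in> UNIV" unfolding C_def by blast
  qed
  have cc: "\<forall>C. (\<forall>B\<in>C. \<exists>x k. B = val_ball p x k) \<and> \<Union>C = UNIV
      \<longrightarrow> (\<exists>F\<subseteq>C. finite F \<and> \<Union>F = UNIV)" using cpt unfolding val_compact_def .
  obtain F where F: "F \<subseteq> C" "finite F" "\<Union>F = UNIV"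
    using cc[rule_format, OF conjI[OF h1 h2]] by blast
  have "Res \<subseteq> F"
  proof
    fix R assume "R \<in> Res"
    then obtain x where R: "R = {y. p dvd (y - x)}" unfolding Res_def by blast
    have "x \<in> \<Union>F" using F(3) by simp
    then obtain B where B: "B \<in> F" "x \<in> B" by (rule UnionE)
    then obtain x' where x': "B = val_ball p x' 1" using F(1) unfolding C_def by blast
    have xx': "p dvd x - x'" using B(2) x' unfolding val_ball_def by simp
    have "R = B"
    proof safe
      fix y assume "y \<in> R"
      then have "p dvd (y - x')" using R xx' dvd_diff_trans by simp
      then show "y \<in> B" using x' unfolding val_ball_def by simp
    next
      fix y assume "y \<in> B"
      then have "p dvd (y - x')" using x' unfolding val_ball_def by simp
      then have "p dvd (y - x)" using xx' dvd_diff_trans dvd_diff_sym by blast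
      then show "y \<in> R" using R by simp
    qed
    then show "R \<in> F" using B by simp
  qed
  then show ?thesis using F(2) finite_subset by blast
qed

definition rep :: "'a set \<Rightarrow> 'a" where
  "rep R = (if 0 \<in> R then 0 else if 1 \<in> R then 1 else (SOME x. x \<in> R))"

definition S :: "'a set" where "S = rep ` Res"

lemma rep_in: assumes "R \<in> Res" shows "rep R \<in> R"
proof -
  obtain x where "R = {y. p dvd (y - x)}" using assms unfolding Res_def by blast
  then have "x \<in> R" by simp
  then show ?thesis unfolding rep_def using someI[of "\<lambda>y. y \<in> R" x] by auto
qed

lemma Res_eq: "R \<in> Res \<Longrightarrow> z \<in> R \<Longrightarrow> R = {y. p dvd (y - z)}"
proof -
  assume "R \<in> Res" "z \<in> R"
  then obtain x where R: "R = {y. p dvd (y - x)}" unfolding Res_def by blast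
  with \<open>z \<in> R\<close> have zx: "p dvd z - x" by simp
  show ?thesis
  proof safe
    fix y assume "y \<in> R"
    then have "p dvd (y - x)" using R by simp
    then show "p dvd y - z" using zx dvd_diff_trans dvd_diff_sym by blast
  next
    fix y assume "p dvd y - z"
    then have "p dvd (y - x)" using zx dvd_diff_trans by blast
    then show "y \<in> R" using R by simp
  qed
qed

lemma S_cover: "\<exists>s\<in>S. p dvd x - s"
proof -
  let ?R = "{y. p dvd (y - x)}"
  have R: "?R \<in> Res" unfolding Res_def by blast
  then have "rep ?R \<in> ?R" by (rule rep_in)
  then have "p dvd x - rep ?R" by (metis dvd_minus_iff minus_diff_eq mem_Collect_eq)
  then show ?thesis using R unfolding S_def by blast
qed

lemma S_uniq: assumes "s \<in> S" "s' \<in> S" "p dvd s - s'" shows "s = s'"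
proof -
  obtain R where R: "R \<in> Res" "s = rep R" using assms(1) unfolding S_def by blast
  obtain R' where R': "R' \<in> Res" "s' = rep R'" using assms(2) unfolding S_def by blast
  have "R = {y. p dvd (y - s)}" using R rep_in Res_eq by blast
  moreover have "R' = {y. p dvd (y - s')}" using R' rep_in Res_eq by blast
  moreover have "{y. p dvd (y - s)} = {y. p dvd (y - s')}"
  proof safe
    fix y assume "p dvd y - s"
    then show "p dvd y - s'" using assms(3) dvd_diff_trans by blast
  next
    fix y assume "p dvd y - s'"
    then show "p dvd y - s" using assms(3) dvd_diff_trans dvd_diff_sym by blast
  qed
  ultimately show ?thesis using R R' by simp
qed

lemma zero_S: "0 \<in> S"
proof -
  have "{y. p dvd (y - 0)} \<in> Res" unfolding Res_def by blast
  moreover have "rep {y. p dvd (y - 0)} = 0" unfolding rep_def by simp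
  ultimately show ?thesis unfolding S_def by force
qed

lemma one_S: "1 \<in> S"
proof -
  have "{y. p dvd (y - 1)} \<in> Res" unfolding Res_def by blast
  moreover have "rep {y. p dvd (y - 1)} = 1" unfolding rep_def using p_nunit by simp
  ultimately show ?thesis unfolding S_def by force
qed

lemma finite_S: "finite S" unfolding S_def using finite_Res by simp

lemma card_S: "card S = residue_card p"
proof -
  have "inj_on rep Res"
  proof (rule inj_onI)
    fix R R' assume "R \<in> Res" "R' \<in> Res" "rep R = rep R'"
    then show "R = R'" using rep_in Res_eq by metis
  qed
  then have "card S = card Res" unfolding S_def by (simp add: card_image)
  then show ?thesis unfolding residue_card_def Res_def by simp
qed

lemma S_ndvd: "s \<in> S \<Longrightarrow> s \<noteq> 0 \<Longrightarrow> \<not> p dvd s"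
proof
  assume "s \<in> S" "s \<noteq> 0" "p dvd s"
  then have "p dvd s - 0" by simp
  then have "s = 0" by (rule S_uniq[OF \<open>s \<in> S\<close> zero_S])
  then show False using \<open>s \<noteq> 0\<close> by simp
qed

lemma S_ndvd1: "s \<in> S \<Longrightarrow> s \<noteq> 1 \<Longrightarrow> \<not> p dvd (1 - s)"
proof
  assume "s \<in> S" "s \<noteq> 1" "p dvd 1 - s"
  then have "p dvd s - 1" by (metis dvd_minus_iff minus_diff_eq)
  then have "s = 1" by (rule S_uniq[OF \<open>s \<in> S\<close> one_S])
  then show False using \<open>s \<noteq> 1\<close> by simp
qed

fun dig :: "'a list \<Rightarrow> 'a" where
  "dig [] = 0"
| "dig (s # l) = s + p * dig l"

definition Lc :: "nat \<Rightarrow> 'a list set" where "Lc c = {l. set l \<subseteq> S \<and> length l = c}"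

lemma finite_Lc: "finite (Lc c)"
  unfolding Lc_def using finite_S by (rule finite_lists_length_eq)

lemma card_Lc: "card (Lc c) = residue_card p ^ c"
  unfolding Lc_def using card_lists_length_eq[OF finite_S] card_S by simp

lemma Lc_Suc: "Lc (Suc c) = (\<lambda>(s, l). s # l) ` (S \<times> Lc c)"
  unfolding Lc_def by (auto simp: length_Suc_conv)

lemma dig_exists: "\<exists>l\<in>Lc c. p ^ c dvd x - dig l"
proof (induction c arbitrary: x)
  case 0 then show ?case by (auto simp: Lc_def)
next
  case (Suc c)
  obtain s where s: "s \<in> S" "p dvd x - s" using S_cover by blast
  then obtain y where y: "x - s = p * y" unfolding dvd_def by blast
  obtain l where l: "l \<in> Lc c" "p ^ c dvd y - dig l" using Suc.IH by blast
  have "s # l \<in> Lc (Suc c)" using s l unfolding Lc_def by simp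
  moreover have "p ^ Suc c dvd x - dig (s # l)"
  proof -
    have "x - dig (s # l) = p * (y - dig l)" using y by (simp add: algebra_simps)
    moreover have "p * p ^ c dvd p * (y - dig l)" using l(2) by (rule mult_dvd_mono[OF dvd_refl])
    ultimately show ?thesis by simp
  qed
  ultimately show ?case by blast
qed

lemma dig_unique: "l \<in> Lc c \<Longrightarrow> l' \<in> Lc c \<Longrightarrow> p ^ c dvd dig l - dig l' \<Longrightarrow> l = l'"
proof (induction c arbitrary: l l')
  case 0 then show ?case by (simp add: Lc_def)
next
  case (Suc c)
  obtain s m where sm: "l = s # m" "s \<in> S" "m \<in> Lc c"
    using Suc.prems(1) unfolding Lc_def by (auto simp: length_Suc_conv)
  obtain s' m' where sm': "l' = s' # m'" "s' \<in> S" "m' \<in> Lc c"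
    using Suc.prems(2) unfolding Lc_def by (auto simp: length_Suc_conv)
  have d: "dig l - dig l' = (s - s') + p * (dig m - dig m')" using sm sm' by (simp add: algebra_simps)
  have pd: "p dvd dig l - dig l'" using Suc.prems(3) by (metis dvd_power dvd_trans zero_less_Suc)
  have "p dvd (dig l - dig l') - p * (dig m - dig m')" using pd by (simp add: dvd_diff)
  then have "p dvd s - s'" using d by simp
  then have ss: "s = s'" using S_uniq sm sm' by blast
  then have "p * p ^ c dvd p * (dig m - dig m')" using d Suc.prems(3) by simp
  then have "p ^ c dvd dig m - dig m'" using dvd_cancel_idom p_nz by blast
  then have "m = m'" using Suc.IH sm sm' by blast
  then show ?case using ss sm sm' by simp
qed

lemma I_index: "bij_betw (\<lambda>l. {y. y - dig l \<in> I k}) (Lc k) (cosets_of (I k))"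
proof (rule coset_bij)
  show "0 \<in> I k" by (simp add: I_def)
  show "\<And>x y. x \<in> I k \<Longrightarrow> y \<in> I k \<Longrightarrow> x + y \<in> I k" by (simp add: I_def)
  show "\<And>x. x \<in> I k \<Longrightarrow> - x \<in> I k" by (simp add: I_def)
  show "\<And>x. \<exists>i\<in>Lc k. x - dig i \<in> I k" using dig_exists by (simp add: I_def)
  show "\<And>i j. i \<in> Lc k \<Longrightarrow> j \<in> Lc k \<Longrightarrow> dig i - dig j \<in> I k \<Longrightarrow> i = j"
    using dig_unique by (simp add: I_def)
qed

lemma I_fin: "finite_index (I k)" and I_sg: "sg_index (I k) = residue_card p ^ k"
  using I_index finite_Lc card_Lc bij_betw_finite bij_betw_same_card
  unfolding finite_index_def sg_index_def by metis+

lemma q_ge2: "residue_card p \<ge> 2"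
proof -
  have "0 \<noteq> (1::'a)" by simp
  then have "{0, 1} \<subseteq> S" "card {0::'a, 1} = 2" using zero_S one_S by auto
  then show ?thesis using card_mono[OF finite_S] card_S by metis
qed

end


context cdvr
begin

definition Lat :: "nat \<Rightarrow> nat \<Rightarrow> 'a \<Rightarrow> ('a \<times> 'a) set" where
  "Lat a c b = {(x, y). \<exists>la. x = p ^ a * la \<and> p ^ c dvd y - la * b}"

lemma Lat_mem: "(x, y) \<in> Lat a c b \<longleftrightarrow> (\<exists>la. x = p ^ a * la \<and> p ^ c dvd y - la * b)"
  unfolding Lat_def by simp

lemma Lat_submod: "submod2 (Lat a c b)"
  unfolding submod2_def
proof (intro conjI ballI allI impI)
  show "0 \<in> Lat a c b" unfolding zero_prod_def Lat_mem by (rule exI[of _ 0]) simp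
next
  fix u v assume "u \<in> Lat a c b" "v \<in> Lat a c b"
  then obtain x y x' y' where uv: "u = (x, y)" "v = (x', y')" "(x, y) \<in> Lat a c b" "(x', y') \<in> Lat a c b"
    by (cases u, cases v) auto
  then obtain la la' where la: "x = p ^ a * la" "p ^ c dvd y - la * b" "x' = p ^ a * la'" "p ^ c dvd y' - la' * b"
    unfolding Lat_mem by blast
  have "x + x' = p ^ a * (la + la')" using la by (simp add: algebra_simps)
  moreover have "p ^ c dvd (y - la * b) + (y' - la' * b)" using la by (simp add: dvd_add)
  then have "p ^ c dvd (y + y') - (la + la') * b" by (simp add: algebra_simps)
  ultimately have "(x + x', y + y') \<in> Lat a c b" unfolding Lat_mem by blast
  then show "u + v \<in> Lat a c b" using uv by simp
next
  fix r x y assume "(x, y) \<in> Lat a c b"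
  then obtain la where la: "x = p ^ a * la" "p ^ c dvd y - la * b" unfolding Lat_mem by blast
  have "r * x = p ^ a * (r * la)" using la by (simp add: algebra_simps)
  moreover have "p ^ c dvd r * (y - la * b)" using la by simp
  then have "p ^ c dvd r * y - (r * la) * b" by (simp add: algebra_simps)
  ultimately show "(r * x, r * y) \<in> Lat a c b" unfolding Lat_mem by blast
qed

lemma submod2_neg: assumes "submod2 L" "v \<in> L" shows "- v \<in> L"
proof -
  obtain x y where v: "v = (x, y)" by (cases v)
  have "((-1) * x, (-1) * y) \<in> L" using assms v unfolding submod2_def by blast
  then show ?thesis using v by simp
qed

lemma submod2_smult: "submod2 L \<Longrightarrow> (x, y) \<in> L \<Longrightarrow> (r * x, r * y) \<in> L"
  unfolding submod2_def by blast

lemma submod2_add: "submod2 L \<Longrightarrow> u \<in> L \<Longrightarrow> v \<in> L \<Longrightarrow> u + v \<in> L"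
  unfolding submod2_def by blast

lemma submod2_diff: "submod2 L \<Longrightarrow> u \<in> L \<Longrightarrow> v \<in> L \<Longrightarrow> u - v \<in> L"
  using submod2_add[of L u "- v"] submod2_neg[of L v] by simp

lemma Lat_index: "bij_betw (\<lambda>ll. {y. y - (dig (fst ll), dig (snd ll)) \<in> Lat a c b})
   (Lc a \<times> Lc c) (cosets_of (Lat a c b))"
proof (rule coset_bij)
  show "0 \<in> Lat a c b" using Lat_submod unfolding submod2_def by blast
  show "\<And>x y. x \<in> Lat a c b \<Longrightarrow> y \<in> Lat a c b \<Longrightarrow> x + y \<in> Lat a c b"
    using Lat_submod submod2_add by blast
  show "\<And>x. x \<in> Lat a c b \<Longrightarrow> - x \<in> Lat a c b"
    using Lat_submod submod2_neg by blast
next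
  fix v :: "'a \<times> 'a"
  obtain x y where v: "v = (x, y)" by (cases v)
  obtain l1 where l1: "l1 \<in> Lc a" "p ^ a dvd x - dig l1" using dig_exists by blast
  then obtain la where la: "x - dig l1 = p ^ a * la" unfolding dvd_def by blast
  obtain l2 where l2: "l2 \<in> Lc c" "p ^ c dvd (y - la * b) - dig l2" using dig_exists by blast
  have "(x - dig l1, y - dig l2) \<in> Lat a c b"
    unfolding Lat_mem using la l2(2) by (intro exI[of _ la]) (simp add: algebra_simps)
  then show "\<exists>i\<in>Lc a \<times> Lc c. v - (dig (fst i), dig (snd i)) \<in> Lat a c b"
    using l1 l2 v by (intro bexI[of _ "(l1, l2)"]) auto
next
  fix i j assume ij: "i \<in> Lc a \<times> Lc c" "j \<in> Lc a \<times> Lc c"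
    "(dig (fst i), dig (snd i)) - (dig (fst j), dig (snd j)) \<in> Lat a c b"
  have "(dig (fst i) - dig (fst j), dig (snd i) - dig (snd j)) \<in> Lat a c b" using ij(3) by simp
  then obtain la where la: "dig (fst i) - dig (fst j) = p ^ a * la"
    "p ^ c dvd (dig (snd i) - dig (snd j)) - la * b" unfolding Lat_mem by blast
  then have "p ^ a dvd dig (fst i) - dig (fst j)" by simp
  then have e1: "fst i = fst j" using dig_unique ij by auto
  then have "p ^ a * la = 0" using la by simp
  then have "la = 0" using p_nz by simp
  then have "p ^ c dvd dig (snd i) - dig (snd j)" using la by simp
  then have "snd i = snd j" using dig_unique ij by auto
  then show "i = j" using e1 by (simp add: prod_eq_iff)
qed

lemma Lat_fin: "finite_index (Lat a c b)"
proof -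
  have "finite (Lc a \<times> Lc c)" using finite_Lc by simp
  then show ?thesis using bij_betw_finite[OF Lat_index] unfolding finite_index_def by simp
qed

lemma Lat_sg: "sg_index (Lat a c b) = residue_card p ^ a * residue_card p ^ c"
proof -
  have "sg_index (Lat a c b) = card (Lc a \<times> Lc c)"
    using bij_betw_same_card[OF Lat_index] unfolding sg_index_def by simp
  then show ?thesis by (simp add: card_cartesian_product card_Lc)
qed

lemma fi_vec:
  assumes L: "submod2 L" and fi: "finite_index L"
  shows "\<exists>k. (p ^ k * w1, p ^ k * w2) \<in> L"
proof -
  define v where "v n = (p ^ n * w1, p ^ n * w2)" for n
  define f where "f n = {y. y - v n \<in> L}" for n
  have "range f \<subseteq> cosets_of L" unfolding f_def cosets_of_def by blast
  then have "finite (range f)" using fi unfolding finite_index_def by (rule finite_subset)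
  then have "\<not> inj f" using finite_imageD infinite_UNIV_nat by blast
  then obtain i j where ij: "f i = f j" "i \<noteq> j" unfolding inj_def by blast
  have key: "\<exists>k. v k \<in> L" if "f i = f j" "i < j" for i j
  proof -
    have "v i \<in> f i" unfolding f_def using L unfolding submod2_def by simp
    then have "v i \<in> f j" using that by simp
    then have d: "v i - v j \<in> L" unfolding f_def by simp
    define u where "u = 1 - p ^ (j - i)"
    have pj: "p ^ j = p ^ i * p ^ (j - i)" using that(2) by (simp add: power_add[symmetric])
    have vd: "v i - v j = (u * (p ^ i * w1), u * (p ^ i * w2))"
      unfolding v_def u_def pj by (simp add: algebra_simps)
    have "\<not> p dvd u" unfolding u_def using p_ndvd_1_minus that(2) by simp
    then obtain w where w: "1 = u * w" using unit_if_ndvd unfolding dvd_def by blast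
    have "(w * (u * (p ^ i * w1)), w * (u * (p ^ i * w2))) \<in> L"
      using submod2_smult[OF L] d vd by metis
    moreover have "w * (u * z) = z" for z using w by (metis mult.assoc mult.commute mult_1)
    ultimately have "v i \<in> L" unfolding v_def by simp
    then show ?thesis by blast
  qed
  have "\<exists>k. v k \<in> L"
  proof (cases "i < j")
    case True then show ?thesis using key ij by blast
  next
    case False then have "j < i" using ij by simp
    then show ?thesis using key ij by metis
  qed
  then show ?thesis unfolding v_def by blast
qed

lemma Lat_class:
  assumes L: "submod2 L" and fi: "finite_index L"
  shows "\<exists>a c l. l \<in> Lc c \<and> L = Lat a c (dig l)"
proof -
  define I1 where "I1 = {x. \<exists>y. (x, y) \<in> L}"
  define I0 where "I0 = {y. (0, y) \<in> L}"
  have s1: "submod1 I1" unfolding submod1_def I1_def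
  proof (intro conjI ballI allI)
    have "(0, 0) \<in> L" using L unfolding submod2_def zero_prod_def by blast
    then show "0 \<in> {x. \<exists>y. (x, y) \<in> L}" by blast
  next
    fix x x' assume "x \<in> {x. \<exists>y. (x, y) \<in> L}" "x' \<in> {x. \<exists>y. (x, y) \<in> L}"
    then obtain y y' where "(x, y) \<in> L" "(x', y') \<in> L" by blast
    then have "(x, y) + (x', y') \<in> L" using L submod2_add by blast
    then show "x + x' \<in> {x. \<exists>y. (x, y) \<in> L}" by auto
  next
    fix r x assume "x \<in> {x. \<exists>y. (x, y) \<in> L}"
    then obtain y where "(x, y) \<in> L" by blast
    then have "(r * x, r * y) \<in> L" using L submod2_smult by blast
    then show "r * x \<in> {x. \<exists>y. (x, y) \<in> L}" by blast
  qed
  have s0: "submod1 I0" unfolding submod1_def I0_def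
  proof (intro conjI ballI allI)
    have "(0, 0) \<in> L" using L unfolding submod2_def zero_prod_def by blast
    then show "0 \<in> {y. (0, y) \<in> L}" by blast
  next
    fix x x' assume "x \<in> {y. (0, y) \<in> L}" "x' \<in> {y. (0, y) \<in> L}"
    then have "(0, x) + (0, x') \<in> L" using L submod2_add by blast
    then show "x + x' \<in> {y. (0, y) \<in> L}" by auto
  next
    fix r x assume "x \<in> {y. (0, y) \<in> L}"
    then have "(r * 0, r * x) \<in> L" using L submod2_smult by blast
    then show "r * x \<in> {y. (0, y) \<in> L}" by simp
  qed
  obtain k1 where "(p ^ k1 * 1, p ^ k1 * 0) \<in> L" using fi_vec[OF L fi] by blast
  then have "p ^ k1 \<in> I1" "p ^ k1 \<noteq> 0" unfolding I1_def using p_nz by auto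
  then have "I1 \<noteq> {0}" by auto
  then obtain a where a: "I1 = I a" using ideal_class s1 by blast
  obtain k0 where "(p ^ k0 * 0, p ^ k0 * 1) \<in> L" using fi_vec[OF L fi] by blast
  then have "p ^ k0 \<in> I0" "p ^ k0 \<noteq> 0" unfolding I0_def using p_nz by auto
  then have "I0 \<noteq> {0}" by auto
  then obtain c where c: "I0 = I c" using ideal_class s0 by blast
  have "p ^ a \<in> I1" using a by (simp add: I_def)
  then obtain b0 where b0: "(p ^ a, b0) \<in> L" unfolding I1_def by blast
  obtain l where l: "l \<in> Lc c" "p ^ c dvd b0 - dig l" using dig_exists by blast
  then have "(0, b0 - dig l) \<in> L" using c unfolding I0_def I_def by auto
  then have "(p ^ a, b0) - (0, b0 - dig l) \<in> L" using L b0 submod2_diff by blast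
  then have pl: "(p ^ a, dig l) \<in> L" by simp
  have "L = Lat a c (dig l)"
  proof safe
    fix x y assume xy: "(x, y) \<in> L"
    then have "x \<in> I a" using a unfolding I1_def by blast
    then obtain la where la: "x = p ^ a * la" unfolding I_def dvd_def by blast
    have "(la * p ^ a, la * dig l) \<in> L" using pl L submod2_smult by blast
    then have "(x, y) - (la * p ^ a, la * dig l) \<in> L" using L xy submod2_diff by blast
    then have "(0, y - la * dig l) \<in> L" using la by (simp add: mult.commute)
    then have "y - la * dig l \<in> I c" using c unfolding I0_def by blast
    then show "(x, y) \<in> Lat a c (dig l)" unfolding Lat_mem I_def using la by blast
  next
    fix x y assume "(x, y) \<in> Lat a c (dig l)"
    then obtain la where la: "x = p ^ a * la" "p ^ c dvd y - la * dig l" unfolding Lat_mem by blast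
    then have "(0, y - la * dig l) \<in> L" using c unfolding I0_def I_def by blast
    moreover have "(la * p ^ a, la * dig l) \<in> L" using pl L submod2_smult by blast
    ultimately have "(0, y - la * dig l) + (la * p ^ a, la * dig l) \<in> L" using L submod2_add by blast
    then show "(x, y) \<in> L" using la by (simp add: mult.commute)
  qed
  then show ?thesis using l by blast
qed

lemma Lat_proj1: "{x. \<exists>y. (x, y) \<in> Lat a c b} = I a"
proof safe
  fix x y assume "(x, y) \<in> Lat a c b" then show "x \<in> I a" unfolding Lat_mem I_def by auto
next
  fix x assume "x \<in> I a"
  then obtain la where "x = p ^ a * la" unfolding I_def dvd_def by blast
  then have "(x, la * b) \<in> Lat a c b" unfolding Lat_mem by auto
  then show "\<exists>y. (x, y) \<in> Lat a c b" by blast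
qed

lemma Lat_proj0: "{y. (0, y) \<in> Lat a c b} = I c"
proof safe
  fix y assume "(0, y) \<in> Lat a c b"
  then obtain la where "0 = p ^ a * la" "p ^ c dvd y - la * b" unfolding Lat_mem by blast
  then show "y \<in> I c" using p_nz unfolding I_def by simp
next
  fix y assume "y \<in> I c" then show "(0, y) \<in> Lat a c b" unfolding Lat_mem I_def
    by (intro exI[of _ 0]) simp
qed

lemma Lat_unique:
  assumes "l \<in> Lc c" "l' \<in> Lc c'" "Lat a c (dig l) = Lat a' c' (dig l')"
  shows "a = a' \<and> c = c' \<and> l = l'"
proof -
  have "I a = I a'" using Lat_proj1 assms(3) by metis
  then have a: "a = a'" by (rule I_inj)
  have "I c = I c'" using Lat_proj0 assms(3) by metis
  then have c: "c = c'" by (rule I_inj)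
  have "(p ^ a, dig l') \<in> Lat a' c' (dig l')" unfolding Lat_mem a by (intro exI[of _ 1]) simp
  then have "(p ^ a, dig l') \<in> Lat a c (dig l)" using assms(3) by simp
  then obtain la where la: "p ^ a = p ^ a * la" "p ^ c dvd dig l' - la * dig l" unfolding Lat_mem by blast
  then have "la = 1" using p_nz by (metis mult_cancel_left1 power_not_zero)
  then have "p ^ c dvd dig l' - dig l" using la by simp
  then have "l' = l" using dig_unique assms(1,2) c by blast
  then show ?thesis using a c by simp
qed

end


context cdvr
begin

definition F :: "nat \<Rightarrow> 'a \<Rightarrow> nat" where "F c g = (LEAST j. p ^ c dvd p ^ j * g)"

lemma F_iff: "p ^ c dvd p ^ j * g \<longleftrightarrow> F c g \<le> j"
proof -
  have mono: "p ^ c dvd p ^ j' * g" if "p ^ c dvd p ^ j * g" "j \<le> j'" for j j'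
  proof -
    have "p ^ j' * g = p ^ (j' - j) * (p ^ j * g)" using that(2)
      by (simp add: power_add[symmetric] mult.assoc)
    then show ?thesis using that(1) by (metis dvd_mult)
  qed
  have ex: "p ^ c dvd p ^ c * g" by simp
  show ?thesis
  proof
    assume "p ^ c dvd p ^ j * g" then show "F c g \<le> j" unfolding F_def by (rule Least_le)
  next
    assume "F c g \<le> j"
    moreover have "p ^ c dvd p ^ F c g * g" unfolding F_def using ex by (rule LeastI)
    ultimately show "p ^ c dvd p ^ j * g" using mono by blast
  qed
qed

lemma F_cong: assumes "\<And>j. p ^ c dvd p ^ j * g \<longleftrightarrow> p ^ c' dvd p ^ j * g'"
  shows "F c g = F c' g'"
  using assms unfolding F_iff by (metis order_antisym order_refl)

lemma F_le: "F c g \<le> c"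
  using F_iff[of c c g] by simp

lemma F_zero: "F 0 g = 0"
  using F_iff[of 0 0 g] by simp

lemma F_unit: assumes "\<not> p dvd g" shows "F c g = c"
proof -
  have "F c g \<le> j \<longleftrightarrow> c \<le> j" for j
  proof -
    have "p ^ c dvd p ^ j * g \<longleftrightarrow> p ^ c dvd g * p ^ j" by (simp add: mult.commute)
    also have "\<dots> \<longleftrightarrow> p ^ c dvd p ^ j" using dvd_unit_mult_iff[OF assms] by simp
    also have "\<dots> \<longleftrightarrow> c \<le> j" by (rule pow_dvd_pow_iff)
    finally show ?thesis unfolding F_iff by simp
  qed
  then show ?thesis by (metis order_antisym order_refl)
qed

lemma F_scale: "F (Suc c) (p * g) = F c g"
proof (rule F_cong)
  fix j
  have "p ^ Suc c dvd p ^ j * (p * g) \<longleftrightarrow> p * p ^ c dvd p * (p ^ j * g)"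
    by (simp add: algebra_simps)
  also have "\<dots> \<longleftrightarrow> p ^ c dvd p ^ j * g" using dvd_cancel_idom p_nz by blast
  finally show "p ^ Suc c dvd p ^ j * (p * g) \<longleftrightarrow> p ^ c dvd p ^ j * g" .
qed

lemma F_neg: "F c (- g) = F c g"
  by (rule F_cong) simp

lemma pe_Lat: "(p ^ e, y) \<in> Lat a c b \<longleftrightarrow> a \<le> e \<and> p ^ c dvd y - p ^ (e - a) * b"
proof
  assume "(p ^ e, y) \<in> Lat a c b"
  then obtain la where la: "p ^ e = p ^ a * la" "p ^ c dvd y - la * b" unfolding Lat_mem by blast
  then have "p ^ a dvd p ^ e" by simp
  then have ae: "a \<le> e" using pow_dvd_pow_iff by simp
  then have "p ^ a * la = p ^ a * p ^ (e - a)" using la(1)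
    by (simp add: power_add[symmetric])
  then have "la = p ^ (e - a)" using p_nz by simp
  then show "a \<le> e \<and> p ^ c dvd y - p ^ (e - a) * b" using ae la by simp
next
  assume h: "a \<le> e \<and> p ^ c dvd y - p ^ (e - a) * b"
  then have "p ^ e = p ^ a * p ^ (e - a)" by (simp add: power_add[symmetric])
  then show "(p ^ e, y) \<in> Lat a c b" unfolding Lat_mem using h by blast
qed

definition E2 :: "nat \<Rightarrow> nat \<Rightarrow> 'a \<Rightarrow> nat" where "E2 a c b = a + F c (p ^ a - b)"
definition E4 :: "nat \<Rightarrow> nat \<Rightarrow> 'a \<Rightarrow> nat" where "E4 a c b = a + F c b"

lemma mem11: "(p ^ e, p ^ e) \<in> Lat a c b \<longleftrightarrow> E2 a c b \<le> e"
proof -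
  have "(p ^ e, p ^ e) \<in> Lat a c b \<longleftrightarrow> a \<le> e \<and> p ^ c dvd p ^ (e - a) * (p ^ a - b)"
  proof (cases "a \<le> e")
    case True
    then have "p ^ e - p ^ (e - a) * b = p ^ (e - a) * (p ^ a - b)"
      by (simp add: algebra_simps power_add[symmetric])
    then show ?thesis unfolding pe_Lat using True by simp
  qed (simp add: pe_Lat)
  also have "\<dots> \<longleftrightarrow> E2 a c b \<le> e" unfolding F_iff E2_def by auto
  finally show ?thesis .
qed

lemma mem10: "(p ^ e, 0) \<in> Lat a c b \<longleftrightarrow> E4 a c b \<le> e"
proof -
  have "(p ^ e, 0) \<in> Lat a c b \<longleftrightarrow> a \<le> e \<and> p ^ c dvd p ^ (e - a) * b"
    unfolding pe_Lat by simp
  also have "\<dots> \<longleftrightarrow> E4 a c b \<le> e" unfolding F_iff E4_def by auto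
  finally show ?thesis .
qed

lemma mem01: "(0, p ^ e) \<in> Lat a c b \<longleftrightarrow> c \<le> e"
  using Lat_proj0[of a c b] pow_dvd_pow_iff unfolding I_def by blast

lemma incl_iff:
  assumes L: "submod2 L" and f: "\<And>x. g x = (x * w1, x * w2)"
  shows "g ` I k \<subseteq> L \<longleftrightarrow> (p ^ k * w1, p ^ k * w2) \<in> L"
proof
  assume "g ` I k \<subseteq> L"
  moreover have "p ^ k \<in> I k" by (simp add: I_def)
  ultimately show "(p ^ k * w1, p ^ k * w2) \<in> L" using f by force
next
  assume h: "(p ^ k * w1, p ^ k * w2) \<in> L"
  show "g ` I k \<subseteq> L"
  proof
    fix z assume "z \<in> g ` I k"
    then obtain x where x: "x \<in> I k" "z = g x" by blast
    then obtain r where "x = p ^ k * r" unfolding I_def dvd_def by blast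
    then have "z = (r * (p ^ k * w1), r * (p ^ k * w2))" using x f by (simp add: algebra_simps)
    then show "z \<in> L" using submod2_smult[OF L h] by simp
  qed
qed

lemma incl2: "submod2 L \<Longrightarrow> (\<lambda>x. (x, x)) ` I k \<subseteq> L \<longleftrightarrow> (p ^ k, p ^ k) \<in> L"
  using incl_iff[of L "\<lambda>x. (x, x)" 1 1] by simp
lemma incl3: "submod2 L \<Longrightarrow> (\<lambda>x. (0, x)) ` I k \<subseteq> L \<longleftrightarrow> (0, p ^ k) \<in> L"
  using incl_iff[of L "\<lambda>x. (0, x)" 0 1] by simp
lemma incl4: "submod2 L \<Longrightarrow> (\<lambda>x. (x, 0)) ` I k \<subseteq> L \<longleftrightarrow> (p ^ k, 0) \<in> L"
  using incl_iff[of L "\<lambda>x. (x, 0)" 1 0] by simp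

definition Y :: "(nat \<times> 'a list) set" where "Y = Sigma UNIV Lc"
definition T :: "((nat \<times> nat \<times> 'a list) \<times> nat \<times> nat \<times> nat) set" where
  "T = (UNIV \<times> Y) \<times> UNIV"

definition Phi :: "(nat \<times> nat \<times> 'a list) \<times> nat \<times> nat \<times> nat \<Rightarrow>
    ('a \<times> 'a) set \<times> 'a set \<times> 'a set \<times> 'a set" where
  "Phi z = (case z of ((a, c, l), d2, d3, d4) \<Rightarrow>
     (Lat a c (dig l), I (E2 a c (dig l) + d2), I (c + d3), I (E4 a c (dig l) + d4)))"

definition Nn :: "nat \<Rightarrow> nat \<Rightarrow> 'a list \<Rightarrow> nat" where
  "Nn a c l = a + c + E2 a c (dig l) + c + E4 a c (dig l)"

lemma Phi_index: "subrep_index (Phi ((a, c, l), d2, d3, d4)) =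
    residue_card p ^ (Nn a c l + d2 + d3 + d4)"
  unfolding Phi_def subrep_index_def Nn_def by (simp add: Lat_sg I_sg power_add)

lemma Phi_bij: "bij_betw Phi T subreps_V"
proof (rule bij_betwI')
  fix x y assume "x \<in> T" "y \<in> T"
  obtain a c l d2 d3 d4 where x: "x = ((a, c, l), d2, d3, d4)" "l \<in> Lc c"
    using \<open>x \<in> T\<close> unfolding T_def Y_def by auto
  obtain a' c' l' d2' d3' d4' where y: "y = ((a', c', l'), d2', d3', d4')" "l' \<in> Lc c'"
    using \<open>y \<in> T\<close> unfolding T_def Y_def by auto
  show "(Phi x = Phi y) = (x = y)"
  proof
    assume h: "Phi x = Phi y"
    then have "Lat a c (dig l) = Lat a' c' (dig l')" using x y unfolding Phi_def by simp
    then have e: "a = a'" "c = c'" "l = l'" using Lat_unique x y by blast+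
    have "I (E2 a c (dig l) + d2) = I (E2 a c (dig l) + d2')"
      "I (c + d3) = I (c + d3')" "I (E4 a c (dig l) + d4) = I (E4 a c (dig l) + d4')"
      using h x y e unfolding Phi_def by simp_all
    then have "d2 = d2'" "d3 = d3'" "d4 = d4'" using I_inj by (metis add_left_cancel)+
    then show "x = y" using x y e by simp
  qed simp
next
  fix x assume "x \<in> T"
  obtain a c l d2 d3 d4 where x: "x = ((a, c, l), d2, d3, d4)" "l \<in> Lc c"
    using \<open>x \<in> T\<close> unfolding T_def Y_def by auto
  let ?L = "Lat a c (dig l)"
  have L: "submod2 ?L" by (rule Lat_submod)
  have "(p ^ (E2 a c (dig l) + d2), p ^ (E2 a c (dig l) + d2)) \<in> ?L" unfolding mem11 by simp
  moreover have "(0, p ^ (c + d3)) \<in> ?L" unfolding mem01 by simp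
  moreover have "(p ^ (E4 a c (dig l) + d4), 0) \<in> ?L" unfolding mem10 by simp
  ultimately show "Phi x \<in> subreps_V"
    unfolding subreps_V_def Phi_def x(1)
    using L Lat_fin submod1_I I_fin incl2[OF L] incl3[OF L] incl4[OF L] by simp
next
  fix W :: "('a \<times> 'a) set \<times> 'a set \<times> 'a set \<times> 'a set" assume "W \<in> subreps_V"
  then obtain L1 :: "('a \<times> 'a) set" and L2 L3 L4 :: "'a set" where W: "W = (L1, L2, L3, L4)" "submod2 L1" "submod1 L2" "submod1 L3"
    "submod1 L4" "finite_index L1" "finite_index L2" "finite_index L3" "finite_index L4"
    "(\<lambda>x. (x, x)) ` L2 \<subseteq> L1" "(\<lambda>x. (0, x)) ` L3 \<subseteq> L1" "(\<lambda>x. (x, 0)) ` L4 \<subseteq> L1"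
    unfolding subreps_V_def by auto
  obtain a c l where L1: "l \<in> Lc c" "L1 = Lat a c (dig l)" using Lat_class W by blast
  obtain k2 where k2: "L2 = I k2" using ideal_class[OF W(3) finite_index_nz[OF W(7)]] by blast
  obtain k3 where k3: "L3 = I k3" using ideal_class[OF W(4) finite_index_nz[OF W(8)]] by blast
  obtain k4 where k4: "L4 = I k4" using ideal_class[OF W(5) finite_index_nz[OF W(9)]] by blast
  have "E2 a c (dig l) \<le> k2" using W(10) incl2[OF W(2)] k2 L1 mem11 by simp
  moreover have "c \<le> k3" using W(11) incl3[OF W(2)] k3 L1 mem01 by simp
  moreover have "E4 a c (dig l) \<le> k4" using W(12) incl4[OF W(2)] k4 L1 mem10 by simp
  ultimately have "W = Phi ((a, c, l), k2 - E2 a c (dig l), k3 - c, k4 - E4 a c (dig l))"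
    unfolding Phi_def using W(1) L1 k2 k3 k4 by simp
  moreover have "((a, c, l), k2 - E2 a c (dig l), k3 - c, k4 - E4 a c (dig l)) \<in> T"
    unfolding T_def Y_def using L1 by simp
  ultimately show "\<exists>x\<in>T. W = Phi x" by blast
qed

end


context cdvr
begin

lemma p_dvd_add_mult: "p dvd x + p * y \<longleftrightarrow> p dvd x"
  by (metis dvd_add_times_triv_right_iff mult.commute)

lemma p_dvd_diff_mult: "p dvd x - p * y \<longleftrightarrow> p dvd x"
  using p_dvd_add_mult[of x "- y"] by simp

lemma Lc_Cons: "s # l \<in> Lc (Suc c) \<longleftrightarrow> s \<in> S \<and> l \<in> Lc c"
  unfolding Lc_def by auto

lemma Lc_0: "l \<in> Lc 0 \<longleftrightarrow> l = []"
  unfolding Lc_def by auto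

lemma Lc_nz: assumes "l \<in> Lc c" "c \<noteq> 0"
  shows "l = hd l # tl l" "hd l \<in> S" "tl l \<in> Lc (c - 1)"
proof -
  have "l \<noteq> []" using assms unfolding Lc_def by auto
  then show "l = hd l # tl l" by simp
  then show "hd l \<in> S" "tl l \<in> Lc (c - 1)" using assms Lc_Cons[of "hd l" "tl l" "c - 1"] by auto
qed

lemma Nn_scale: "Nn (Suc a) (Suc c) (0 # l) = Nn a c l + 5"
proof -
  have "p ^ Suc a - p * dig l = p * (p ^ a - dig l)" by (simp add: algebra_simps)
  then show ?thesis unfolding Nn_def E2_def E4_def by (simp add: F_scale)
qed

lemma Nn_c0: "Nn a 0 l = 3 * a"
  unfolding Nn_def E2_def E4_def by (simp add: F_zero)

lemma F_B: assumes "\<not> p dvd g" shows "F c g = c" using F_unit assms .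

lemma dig_ndvd: assumes "s \<in> S" "s \<noteq> 0" shows "\<not> p dvd dig (s # l)"
  using S_ndvd[OF assms] p_dvd_add_mult by simp

lemma Nn_B: assumes "a \<noteq> 0" "s \<in> S" "s \<noteq> 0"
  shows "Nn a (Suc c) (s # l) = 3 * a + 4 * Suc c"
proof -
  have h1: "\<not> p dvd dig (s # l)" using dig_ndvd assms by blast
  have "p dvd p ^ a" using assms(1) by (simp add: dvd_power)
  have h2: "\<not> p dvd p ^ a - dig (s # l)"
  proof
    assume "p dvd p ^ a - dig (s # l)"
    then have "p dvd p ^ a - (p ^ a - dig (s # l))" by (rule dvd_diff[OF \<open>p dvd p ^ a\<close>])
    then show False using h1 by simp
  qed
  show ?thesis unfolding Nn_def E2_def E4_def using F_unit[OF h1] F_unit[OF h2] by simp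
qed

lemma Nn_C0: "Nn 0 (Suc c) (0 # l) = 3 + (3 * c + F c (dig l))"
proof -
  have "\<not> p dvd 1 - p * dig l" using p_dvd_diff_mult p_nunit by simp
  then show ?thesis unfolding Nn_def E2_def E4_def using F_unit F_scale by simp
qed

lemma Nn_C1: "Nn 0 (Suc c) (1 # l) = 3 + (3 * c + F c (dig l))"
proof -
  have "\<not> p dvd 1 + p * dig l" using p_dvd_add_mult p_nunit by simp
  moreover have "1 - (1 + p * dig l) = p * (- dig l)" by simp
  ultimately show ?thesis unfolding Nn_def E2_def E4_def using F_unit F_scale F_neg by simp
qed

lemma Nn_C2: assumes "s \<in> S" "s \<noteq> 0" "s \<noteq> 1"
  shows "Nn 0 (Suc c) (s # l) = 4 * Suc c"
proof -
  have h1: "\<not> p dvd dig (s # l)" using dig_ndvd assms by blast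
  have e: "1 - dig (s # l) = (1 - s) - p * dig l" by simp
  have h2: "\<not> p dvd 1 - dig (s # l)" unfolding e p_dvd_diff_mult using S_ndvd1[OF assms(1,3)] .
  show ?thesis unfolding Nn_def E2_def E4_def using F_unit[OF h1] F_unit[OF h2] by simp
qed

lemma Nn_ge: "a + 2 * c \<le> Nn a c l"
  unfolding Nn_def E2_def E4_def by simp

end

locale cdvr_t = cdvr p for p :: "'a::idom" +
  fixes t :: complex
  assumes tq: "of_nat (residue_card p) * norm t < 1"
begin

abbreviation q where "q \<equiv> residue_card p"

lemma r_lt: "norm t < 1"
proof -
  have "1 * norm t \<le> of_nat q * norm t" using q_ge2 by (intro mult_right_mono) auto
  then show ?thesis using tq by simp
qed

lemma qpow_lt: assumes "k \<noteq> 0" shows "of_nat q * norm (t ^ k) < 1"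
proof -
  have "norm (t ^ k) \<le> norm t" unfolding norm_power
    using power_decreasing[of 1 k "norm t"] r_lt assms by simp
  then have "of_nat q * norm (t ^ k) \<le> of_nat q * norm t" by (simp add: mult_left_mono)
  then show ?thesis using tq by simp
qed

lemma pow_lt: assumes "k \<noteq> 0" shows "norm (t ^ k) < 1"
  using r_lt assms by (simp add: norm_power power_less_one_iff)

end

lemma has_sum_geo_real:
  fixes x :: real assumes "0 \<le> x" "x < 1"
  shows "((\<lambda>n. x ^ n) has_sum 1 / (1 - x)) UNIV"
proof (rule norm_summable_imp_has_sum)
  show "summable (\<lambda>n. norm (x ^ n))" using assms by (simp add: summable_geometric)
  show "(\<lambda>n. x ^ n) sums (1 / (1 - x))" using geometric_sums[of x] assms by simp
qed

context cdvr
begin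

lemma YV: fixes z :: complex assumes z: "of_nat (residue_card p) * norm z < 1"
  shows "((\<lambda>(c, l). z ^ c) has_sum 1 / (1 - of_nat (residue_card p) * z)) Y"
proof -
  let ?q = "residue_card p"
  have fib: "((\<lambda>l. z ^ c) has_sum (of_nat ?q * z) ^ c) (Lc c)" for c
  proof -
    have "((\<lambda>l. z ^ c) has_sum of_nat (card (Lc c)) * z ^ c) (Lc c)"
      using finite_Lc by (rule has_sum_constant)
    then show ?thesis by (simp add: card_Lc power_mult_distrib)
  qed
  have sm: "(\<lambda>(c, l). z ^ c) summable_on Sigma UNIV Lc"
  proof (rule abs_summable_summable, rule Infinite_Sum.abs_summable_on_Sigma_iff[THEN iffD2], intro conjI ballI)
    fix c :: nat
    show "(\<lambda>l. norm (case (c, l) of (c, l) \<Rightarrow> z ^ c)) summable_on Lc c"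
      using finite_Lc by simp
  next
    have "(\<Sum>\<^sub>\<infinity>l\<in>Lc c. norm (case (c, l) of (c, l) \<Rightarrow> z ^ c)) = (of_nat ?q * norm z) ^ c" for c
      using finite_Lc by (simp add: card_Lc norm_power power_mult_distrib)
    moreover have "(\<lambda>c. (of_nat ?q * norm z) ^ c) summable_on UNIV"
      using has_sum_geo_real[of "of_nat ?q * norm z"] z has_sum_imp_summable by force
    ultimately show "(\<lambda>c. norm (\<Sum>\<^sub>\<infinity>l\<in>Lc c. norm (case (c, l) of (c, l) \<Rightarrow> z ^ c))) summable_on UNIV"
      by simp
  qed
  have "norm (of_nat ?q * z) < 1" using z by (simp add: norm_mult)
  then have geo: "((\<lambda>c. (of_nat ?q * z) ^ c) has_sum 1 / (1 - of_nat ?q * z)) UNIV" by (rule has_sum_geo)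
  show ?thesis unfolding Y_def
    by (rule has_sum_SigmaI[where f="\<lambda>(c, l). z ^ c" and g="\<lambda>c. (of_nat ?q * z) ^ c", OF _ geo sm])
      (use fib in simp)
qed

end


context cdvr
begin

lemma Y_mem: "(c, l) \<in> Y \<longleftrightarrow> l \<in> Lc c" unfolding Y_def by simp

lemma Y_c0: "{x\<in>Y. fst x = 0} = {(0, [])}"
  unfolding Y_def by (auto simp: Lc_0)

lemma Y_tl: assumes "(c, l) \<in> Y" "c \<noteq> 0"
  shows "(Suc (c - 1), hd l # tl l) = (c, l)" "(c - 1, tl l) \<in> Y" "hd l \<in> S"
  using Lc_nz[of l c] assms unfolding Y_def by auto

lemma Y_Cons: "(Suc c, s # l) \<in> Y \<longleftrightarrow> s \<in> S \<and> (c, l) \<in> Y"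
  unfolding Y_def by (simp add: Lc_Cons)

end

context cdvr_t
begin

definition fX :: "nat \<times> nat \<times> 'a list \<Rightarrow> complex" where "fX = (\<lambda>(a, c, l). t ^ Nn a c l)"
definition fK :: "nat \<times> 'a list \<Rightarrow> complex" where "fK = (\<lambda>(c, l). t ^ (3 * c + F c (dig l)))"
definition f4 :: "nat \<times> 'a list \<Rightarrow> complex" where "f4 = (\<lambda>(c, l). (t ^ 4) ^ c)"
definition X :: "(nat \<times> nat \<times> 'a list) set" where "X = UNIV \<times> Y"
definition V :: complex where "V = 1 / (1 - of_nat q * t ^ 4)"

lemma HV: "(f4 has_sum V) Y"
  using YV[of "t ^ 4"] qpow_lt[of 4] unfolding f4_def V_def by simp

lemma fX_sm: "fX summable_on X"
proof -
  define r where "r = norm t"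
  have r0: "0 \<le> r" "r \<le> 1" using r_lt unfolding r_def by auto
  have g1: "((\<lambda>a. (complex_of_real r) ^ a) has_sum 1 / (1 - complex_of_real r)) UNIV"
    using has_sum_geo[of "complex_of_real r"] r_lt unfolding r_def by simp
  have "of_nat q * norm (complex_of_real (r ^ 2)) < 1"
    using qpow_lt[of 2] unfolding r_def by (simp add: norm_power)
  then have g2: "((\<lambda>(c, l). (complex_of_real (r ^ 2)) ^ c) has_sum 1 / (1 - of_nat q * complex_of_real (r ^ 2))) Y"
    by (rule YV)
  have gm: "((\<lambda>(a, y). (complex_of_real r) ^ a * (case y of (c, l) \<Rightarrow> (complex_of_real (r ^ 2)) ^ c))
      has_sum (1 / (1 - complex_of_real r)) * (1 / (1 - of_nat q * complex_of_real (r ^ 2)))) ((UNIV::nat set) \<times> Y)"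
    using has_sum_prod_mult[OF g1 g2] by simp
  then have "(\<lambda>x. norm ((\<lambda>(a, y). (complex_of_real r) ^ a * (case y of (c, l) \<Rightarrow> (complex_of_real (r ^ 2)) ^ c)) x)) summable_on ((UNIV::nat set) \<times> Y)"
    using summable_on_iff_abs_summable_on_complex has_sum_imp_summable by blast
  then have "(\<lambda>x. norm (fX x)) summable_on ((UNIV::nat set) \<times> Y)"
  proof (rule Infinite_Sum.abs_summable_on_comparison_test)
    fix x assume "x \<in> (UNIV::nat set) \<times> Y"
    obtain a c l where x: "x = (a, c, l)" by (cases x) auto
    have "norm (fX x) = r ^ Nn a c l" unfolding x fX_def r_def by (simp add: norm_power)
    also have "\<dots> \<le> r ^ (a + 2 * c)" using Nn_ge r0 by (intro power_decreasing) auto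
    also have "\<dots> = norm ((\<lambda>(a, y). (complex_of_real r) ^ a * (case y of (c, l) \<Rightarrow> (complex_of_real (r ^ 2)) ^ c)) x)"
      unfolding x using r0 by (simp add: norm_mult norm_power power_add power_mult)
    finally show "norm (fX x) \<le> norm ((\<lambda>(a, y). (complex_of_real r) ^ a * (case y of (c, l) \<Rightarrow> (complex_of_real (r ^ 2)) ^ c)) x)" .
  qed
  then show ?thesis unfolding X_def by (rule abs_summable_summable)
qed

lemma fK_sm: "fK summable_on Y"
proof -
  have "((\<lambda>(c, l). (t ^ 3) ^ c) has_sum 1 / (1 - of_nat q * t ^ 3)) Y"
    using YV[of "t ^ 3"] qpow_lt[of 3] by simp
  then have "(\<lambda>x. norm ((\<lambda>(c, l). (t ^ 3) ^ c) x)) summable_on Y"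
    using summable_on_iff_abs_summable_on_complex has_sum_imp_summable by blast
  then have "(\<lambda>x. norm (fK x)) summable_on Y"
  proof (rule Infinite_Sum.abs_summable_on_comparison_test)
    fix x assume "x \<in> Y"
    obtain c l where x: "x = (c, l)" by (cases x) auto
    have "norm (fK x) = norm t ^ (3 * c + F c (dig l))" unfolding x fK_def by (simp add: norm_power)
    also have "\<dots> \<le> norm t ^ (3 * c)" using r_lt by (intro power_decreasing) auto
    also have "\<dots> = norm ((\<lambda>(c, l). (t ^ 3) ^ c) x)" unfolding x by (simp add: norm_power power_mult)
    finally show "norm (fK x) \<le> norm ((\<lambda>(c, l). (t ^ 3) ^ c) x)" .
  qed
  then show ?thesis by (rule abs_summable_summable)
qed

end


context cdvr_t
begin

definition Yn where "Yn = {x\<in>Y. \<not> fst x = 0}"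
definition Yne where "Yne = {x\<in>Yn. \<not> hd (snd x) = 0}"
definition Y2 where "Y2 = {x\<in>Yne. \<not> hd (snd x) = 1}"

lemma shift_Y:
  fixes g h :: "nat \<times> 'a list \<Rightarrow> complex" and s0 :: 'a and A :: "(nat \<times> 'a list) set"
  assumes s0: "s0 \<in> S" and A: "A = {x\<in>Y. \<not> fst x = 0 \<and> hd (snd x) = s0}"
    and gh: "\<And>c l. (c, l) \<in> Y \<Longrightarrow> h (Suc c, s0 # l) = g (c, l)"
  shows "(g has_sum v) Y \<longleftrightarrow> (h has_sum v) A"
proof (rule has_sum_reindex_bij_witness[where i="\<lambda>(c, l). (c - 1, tl l)" and j="\<lambda>(c, l). (Suc c, s0 # l)"])
  fix x assume "x \<in> Y" then obtain c l where x: "x = (c, l)" "(c, l) \<in> Y" by (cases x) auto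
  show "(case (case x of (c, l) \<Rightarrow> (Suc c, s0 # l)) of (c, l) \<Rightarrow> (c - 1, tl l)) = x" using x by simp
  show "(case x of (c, l) \<Rightarrow> (Suc c, s0 # l)) \<in> A" using x s0 A by (simp add: Y_Cons)
  show "h (case x of (c, l) \<Rightarrow> (Suc c, s0 # l)) = g x" using x gh by simp
next
  fix x assume "x \<in> A" then obtain c l where x: "x = (c, l)" "(c, l) \<in> Y" "c \<noteq> 0" "hd l = s0"
    using A by (cases x) auto
  show "(case (case x of (c, l) \<Rightarrow> (c - 1, tl l)) of (c, l) \<Rightarrow> (Suc c, s0 # l)) = x"
    using x Y_tl(1)[of c l] by simp
  show "(case x of (c, l) \<Rightarrow> (c - 1, tl l)) \<in> Y" using x Y_tl(2)[of c l] by simp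
qed simp

lemma V_parts:
  "(f4 has_sum 1) {x\<in>Y. fst x = 0}"
  "(f4 has_sum t ^ 4 * V) {x\<in>Yn. hd (snd x) = 0}"
  "(f4 has_sum t ^ 4 * V) {x\<in>Yne. hd (snd x) = 1}"
proof -
  show "(f4 has_sum 1) {x\<in>Y. fst x = 0}" unfolding Y_c0 f4_def by (simp add: has_sum_finiteI)
  have "((\<lambda>x. t ^ 4 * f4 x) has_sum t ^ 4 * V) Y" using HV by (rule has_sum_cmult_right)
  moreover have "{x\<in>Yn. hd (snd x) = 0} = {x\<in>Y. \<not> fst x = 0 \<and> hd (snd x) = 0}" unfolding Yn_def by auto
  ultimately show "(f4 has_sum t ^ 4 * V) {x\<in>Yn. hd (snd x) = 0}"
    using shift_Y[OF zero_S refl, where g="\<lambda>x. t ^ 4 * f4 x" and h=f4 and v="t ^ 4 * V"]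
    unfolding f4_def by (simp add: power_mult_distrib power_add)
  have "((\<lambda>x. t ^ 4 * f4 x) has_sum t ^ 4 * V) Y" using HV by (rule has_sum_cmult_right)
  moreover have "{x\<in>Yne. hd (snd x) = 1} = {x\<in>Y. \<not> fst x = 0 \<and> hd (snd x) = 1}" unfolding Yne_def Yn_def by auto
  ultimately show "(f4 has_sum t ^ 4 * V) {x\<in>Yne. hd (snd x) = 1}"
    using shift_Y[OF one_S refl, where g="\<lambda>x. t ^ 4 * f4 x" and h=f4 and v="t ^ 4 * V"]
    unfolding f4_def by (simp add: power_mult_distrib power_add)
qed

definition W2 where "W2 = infsum f4 Y2"

lemma HW2: "(f4 has_sum W2) Y2"
proof -
  have "Y2 \<subseteq> Y" unfolding Y2_def Yne_def Yn_def by auto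
  then have "f4 summable_on Y2" using HV has_sum_imp_summable summable_on_subset_banach by blast
  then show ?thesis unfolding W2_def by simp
qed

lemma HYne: "(f4 has_sum t ^ 4 * V + W2) Yne"
  using has_sum_split[OF V_parts(3) HW2[unfolded Y2_def]] .

lemma V_eq: "V = 1 + (t ^ 4 * V + (t ^ 4 * V + W2))"
proof -
  have "(f4 has_sum t ^ 4 * V + (t ^ 4 * V + W2)) Yn"
    using has_sum_split[OF V_parts(2) HYne[unfolded Yne_def]] .
  then have "(f4 has_sum 1 + (t ^ 4 * V + (t ^ 4 * V + W2))) Y"
    using has_sum_split[OF V_parts(1)] unfolding Yn_def by blast
  then show ?thesis using HV has_sum_unique by blast
qed


definition K where "K = infsum fK Y"

lemma HK: "(fK has_sum K) Y" using fK_sm unfolding K_def by simp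

lemma Y_cases0: assumes "(c, l) \<in> Y" "c \<noteq> 0"
  obtains c' l' where "c = Suc c'" "l = hd l # l'" "(c', l') \<in> Y" "hd l \<in> S"
  using Y_tl[OF assms] assms(2) by (metis Suc_pred' not_gr0 prod.inject)

lemma Y_cases: assumes "(c, l) \<in> Y" "c \<noteq> 0"
  obtains c' s l' where "c = Suc c'" "l = s # l'" "(c', l') \<in> Y" "s \<in> S"
  using Y_cases0[OF assms] by metis

lemma K_eq: "K = 1 + (t ^ 3 * K + (t ^ 4 * V + W2))"
proof -
  have K1: "(fK has_sum 1) {x\<in>Y. fst x = 0}" unfolding Y_c0 fK_def by (simp add: has_sum_finiteI F_zero)
  have "((\<lambda>x. t ^ 3 * fK x) has_sum t ^ 3 * K) Y" using HK by (rule has_sum_cmult_right)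
  moreover have "{x\<in>Yn. hd (snd x) = 0} = {x\<in>Y. \<not> fst x = 0 \<and> hd (snd x) = 0}" unfolding Yn_def by auto
  moreover have "fK (Suc c, 0 # l) = t ^ 3 * fK (c, l)" for c l
    unfolding fK_def using F_scale by (simp add: power_add)
  ultimately have K2: "(fK has_sum t ^ 3 * K) {x\<in>Yn. hd (snd x) = 0}"
    using shift_Y[OF zero_S refl, where g="\<lambda>x. t ^ 3 * fK x" and h=fK and v="t ^ 3 * K"] by simp
  have K3: "(fK has_sum t ^ 4 * V + W2) Yne"
  proof -
    have "fK x = f4 x" if "x \<in> Yne" for x
    proof -
      obtain c l where x0: "x = (c, l)" by (cases x)
      then have x: "x = (c, l)" "(c, l) \<in> Y" "c \<noteq> 0" "hd l \<noteq> 0"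
        using that unfolding Yne_def Yn_def by auto
      obtain c' s l' where cl: "c = Suc c'" "l = s # l'" "(c', l') \<in> Y" "s \<in> S"
        by (rule Y_cases[OF x(2) x(3)])
      have "s \<noteq> 0" using x(4) cl(2) by simp
      then have "\<not> p dvd dig l" using dig_ndvd[OF cl(4)] cl(2) by simp
      then have "F c (dig l) = c" by (rule F_unit)
      then show ?thesis unfolding x fK_def f4_def by (simp add: power_mult[symmetric])
    qed
    then show ?thesis using HYne has_sum_cong by blast
  qed
  have "(fK has_sum t ^ 3 * K + (t ^ 4 * V + W2)) Yn"
    using has_sum_split[OF K2 K3[unfolded Yne_def]] .
  then have "(fK has_sum 1 + (t ^ 3 * K + (t ^ 4 * V + W2))) Y"
    using has_sum_split[OF K1] unfolding Yn_def by blast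
  then show ?thesis using HK has_sum_unique by blast
qed


definition Z where "Z = infsum fX X"

lemma HZ: "(fX has_sum Z) X" using fX_sm unfolding Z_def by simp

definition Xn where "Xn = {x\<in>X. \<not> fst (snd x) = 0}"
definition X0 where "X0 = {x\<in>Xn. fst x = 0}"
definition X0' where "X0' = {x\<in>X0. \<not> hd (snd (snd x)) = 0}"
definition X1 where "X1 = {x\<in>Xn. \<not> fst x = 0}"

lemma X_mem: "(a, c, l) \<in> X \<longleftrightarrow> (c, l) \<in> Y" unfolding X_def by simp

lemma Z1: "(fX has_sum 1 / (1 - t ^ 3)) {x\<in>X. fst (snd x) = 0}"
proof -
  have g: "((\<lambda>a. (t ^ 3) ^ a) has_sum 1 / (1 - t ^ 3)) UNIV" using pow_lt[of 3] by (intro has_sum_geo) simp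
  have "((\<lambda>a. (t ^ 3) ^ a) has_sum 1 / (1 - t ^ 3)) UNIV = (fX has_sum 1 / (1 - t ^ 3)) {x\<in>X. fst (snd x) = 0}"
  proof (rule has_sum_reindex_bij_witness[where i="fst" and j="\<lambda>a. (a, 0, [])"])
    fix a :: nat
    show "(a, 0, []) \<in> {x\<in>X. fst (snd x) = 0}" unfolding X_def Y_def Lc_def by simp
    show "fX (a, 0, []) = (t ^ 3) ^ a" unfolding fX_def by (simp add: Nn_c0 power_mult)
  next
    fix x assume "x \<in> {x\<in>X. fst (snd x) = 0}"
    then obtain a l where "x = (a, 0, l)" "l \<in> Lc 0" unfolding X_def Y_def by (cases x) auto
    then show "(fst x, 0, []) = x" by (simp add: Lc_0)
  qed auto
  then show ?thesis using g by simp
qed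

lemma Z23:
  "(fX has_sum t ^ 3 * K) {x\<in>X0. hd (snd (snd x)) = 0}"
  "(fX has_sum t ^ 3 * K) {x\<in>X0'. hd (snd (snd x)) = 1}"
proof -
  have gen: "(fX has_sum t ^ 3 * K) {x\<in>X. \<not> fst (snd x) = 0 \<and> fst x = 0 \<and> hd (snd (snd x)) = s0}"
    if s0: "s0 \<in> S" and w: "\<And>c l. fX (0, Suc c, s0 # l) = t ^ 3 * fK (c, l)" for s0
  proof -
    have "((\<lambda>y. t ^ 3 * fK y) has_sum t ^ 3 * K) Y" using HK by (rule has_sum_cmult_right)
    moreover have "((\<lambda>y. t ^ 3 * fK y) has_sum t ^ 3 * K) Y =
       (fX has_sum t ^ 3 * K) {x\<in>X. \<not> fst (snd x) = 0 \<and> fst x = 0 \<and> hd (snd (snd x)) = s0}"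
    proof (rule has_sum_reindex_bij_witness[where i="\<lambda>x. (fst (snd x) - 1, tl (snd (snd x)))"
          and j="\<lambda>(c, l). (0, Suc c, s0 # l)"])
      fix y assume "y \<in> Y" then obtain c l where y: "y = (c, l)" "(c, l) \<in> Y" by (cases y) auto
      show "(case y of (c, l) \<Rightarrow> (0, Suc c, s0 # l)) \<in> {x\<in>X. \<not> fst (snd x) = 0 \<and> fst x = 0 \<and> hd (snd (snd x)) = s0}"
        using y s0 by (simp add: X_mem Y_Cons)
      show "fX (case y of (c, l) \<Rightarrow> (0, Suc c, s0 # l)) = t ^ 3 * fK y" using y w by simp
      show "(fst (snd (case y of (c, l) \<Rightarrow> (0, Suc c, s0 # l))) - 1, tl (snd (snd (case y of (c, l) \<Rightarrow> (0, Suc c, s0 # l))))) = y"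
        using y by simp
    next
      fix x assume "x \<in> {x\<in>X. \<not> fst (snd x) = 0 \<and> fst x = 0 \<and> hd (snd (snd x)) = s0}"
      then obtain c l where x: "x = (0, c, l)" "(c, l) \<in> Y" "c \<noteq> 0" "hd l = s0"
        by (cases x) (auto simp: X_mem)
      obtain c' s l' where cl: "c = Suc c'" "l = s # l'" "(c', l') \<in> Y" "s \<in> S"
        by (rule Y_cases[OF x(2) x(3)])
      show "(fst (snd x) - 1, tl (snd (snd x))) \<in> Y" using x cl by simp
      show "(case (fst (snd x) - 1, tl (snd (snd x))) of (c, l) \<Rightarrow> (0, Suc c, s0 # l)) = x"
        using x cl by simp
    qed simp
    ultimately show ?thesis by simp
  qed
  have w0: "fX (0, Suc c, 0 # l) = t ^ 3 * fK (c, l)" for c l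
    unfolding fX_def fK_def by (simp add: Nn_C0 power_add)
  have w1: "fX (0, Suc c, 1 # l) = t ^ 3 * fK (c, l)" for c l
    unfolding fX_def fK_def by (simp add: Nn_C1 power_add)
  have "{x\<in>X0. hd (snd (snd x)) = 0} = {x\<in>X. \<not> fst (snd x) = 0 \<and> fst x = 0 \<and> hd (snd (snd x)) = 0}"
    unfolding X0_def Xn_def by auto
  then show "(fX has_sum t ^ 3 * K) {x\<in>X0. hd (snd (snd x)) = 0}" using gen[OF zero_S w0] by simp
  have "{x\<in>X0'. hd (snd (snd x)) = 1} = {x\<in>X. \<not> fst (snd x) = 0 \<and> fst x = 0 \<and> hd (snd (snd x)) = 1}"
    unfolding X0'_def X0_def Xn_def by auto
  then show "(fX has_sum t ^ 3 * K) {x\<in>X0'. hd (snd (snd x)) = 1}" using gen[OF one_S w1] by simp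
qed


lemma Z4: "(fX has_sum W2) {x\<in>X0'. \<not> hd (snd (snd x)) = 1}"
proof -
  have "(f4 has_sum W2) Y2 = (fX has_sum W2) {x\<in>X0'. \<not> hd (snd (snd x)) = 1}"
  proof (rule has_sum_reindex_bij_witness[where i="snd" and j="\<lambda>y. (0, y)"])
    fix y assume "y \<in> Y2"
    then obtain c l where y: "y = (c, l)" "(c, l) \<in> Y" "c \<noteq> 0" "hd l \<noteq> 0" "hd l \<noteq> 1"
      unfolding Y2_def Yne_def Yn_def by (cases y) auto
    obtain c' s l' where cl: "c = Suc c'" "l = s # l'" "(c', l') \<in> Y" "s \<in> S"
      by (rule Y_cases[OF y(2) y(3)])
    show "(0, y) \<in> {x\<in>X0'. \<not> hd (snd (snd x)) = 1}"
      using y unfolding X0'_def X0_def Xn_def by (simp add: X_mem)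
    have "s \<noteq> 0" "s \<noteq> 1" using y(4,5) cl(2) by simp_all
    then have "Nn 0 c l = 4 * c" using Nn_C2[OF cl(4), of c' l'] cl by simp
    then show "fX (0, y) = f4 y" unfolding y fX_def f4_def by (simp add: power_mult[symmetric])
  next
    fix x assume "x \<in> {x\<in>X0'. \<not> hd (snd (snd x)) = 1}"
    then obtain c l where x: "x = (0, c, l)" "(c, l) \<in> Y" "c \<noteq> 0" "hd l \<noteq> 0" "hd l \<noteq> 1"
      unfolding X0'_def X0_def Xn_def by (cases x) (auto simp: X_mem)
    show "snd x \<in> Y2" using x unfolding Y2_def Yne_def Yn_def by simp
    show "(0, snd x) = x" using x by simp
  qed auto
  then show ?thesis using HW2 by simp
qed

lemma Z5: "(fX has_sum t ^ 5 * Z) {x\<in>X1. hd (snd (snd x)) = 0}"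
proof -
  have "((\<lambda>y. t ^ 5 * fX y) has_sum t ^ 5 * Z) X" using HZ by (rule has_sum_cmult_right)
  moreover have "((\<lambda>y. t ^ 5 * fX y) has_sum t ^ 5 * Z) X = (fX has_sum t ^ 5 * Z) {x\<in>X1. hd (snd (snd x)) = 0}"
  proof (rule has_sum_reindex_bij_witness[where i="\<lambda>(a, c, l). (a - 1, c - 1, tl l)"
        and j="\<lambda>(a, c, l). (Suc a, Suc c, 0 # l)"])
    fix y assume "y \<in> X"
    then obtain a c l where y: "y = (a, c, l)" "(c, l) \<in> Y" by (cases y) (auto simp: X_mem)
    show "(case y of (a, c, l) \<Rightarrow> (Suc a, Suc c, 0 # l)) \<in> {x\<in>X1. hd (snd (snd x)) = 0}"
      using y zero_S unfolding X1_def Xn_def by (simp add: X_mem Y_Cons)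
    show "fX (case y of (a, c, l) \<Rightarrow> (Suc a, Suc c, 0 # l)) = t ^ 5 * fX y"
      using y unfolding fX_def by (simp add: Nn_scale power_add)
    show "(case case y of (a, c, l) \<Rightarrow> (Suc a, Suc c, 0 # l) of (a, c, l) \<Rightarrow> (a - 1, c - 1, tl l)) = y"
      using y by simp
  next
    fix x assume "x \<in> {x\<in>X1. hd (snd (snd x)) = 0}"
    then obtain a c l where x: "x = (a, c, l)" "(c, l) \<in> Y" "c \<noteq> 0" "a \<noteq> 0" "hd l = 0"
      unfolding X1_def Xn_def by (cases x) (auto simp: X_mem)
    obtain c' s l' where cl: "c = Suc c'" "l = s # l'" "(c', l') \<in> Y" "s \<in> S"
      by (rule Y_cases[OF x(2) x(3)])
    show "(case x of (a, c, l) \<Rightarrow> (a - 1, c - 1, tl l)) \<in> X" using x cl by (simp add: X_mem)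
    show "(case case x of (a, c, l) \<Rightarrow> (a - 1, c - 1, tl l) of (a, c, l) \<Rightarrow> (Suc a, Suc c, 0 # l)) = x"
      using x cl by simp
  qed simp
  ultimately show ?thesis by simp
qed

lemma Z6: "(fX has_sum (t ^ 3 / (1 - t ^ 3)) * (t ^ 4 * V + W2)) {x\<in>X1. \<not> hd (snd (snd x)) = 0}"
proof -
  have g: "((\<lambda>a. (t ^ 3) ^ a) has_sum t ^ 3 / (1 - t ^ 3)) {1::nat..}" using pow_lt[of 3] by (intro has_sum_geometric_from_1) simp
  have pm: "((\<lambda>(a, y). (t ^ 3) ^ a * f4 y) has_sum (t ^ 3 / (1 - t ^ 3)) * (t ^ 4 * V + W2)) ({1::nat..} \<times> Yne)"
    using has_sum_prod_mult[OF g HYne] .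
  have "((\<lambda>(a, y). (t ^ 3) ^ a * f4 y) has_sum (t ^ 3 / (1 - t ^ 3)) * (t ^ 4 * V + W2)) ({1::nat..} \<times> Yne)
     = (fX has_sum (t ^ 3 / (1 - t ^ 3)) * (t ^ 4 * V + W2)) {x\<in>X1. \<not> hd (snd (snd x)) = 0}"
  proof (rule has_sum_reindex_bij_witness[where i="\<lambda>x. x" and j="\<lambda>x. x"])
    fix y assume "y \<in> {1::nat..} \<times> Yne"
    then obtain a c l where y: "y = (a, c, l)" "(c, l) \<in> Y" "c \<noteq> 0" "a \<noteq> 0" "hd l \<noteq> 0"
      unfolding Yne_def Yn_def by (cases y) auto
    obtain c' s l' where cl: "c = Suc c'" "l = s # l'" "(c', l') \<in> Y" "s \<in> S"
      by (rule Y_cases[OF y(2) y(3)])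
    show "y \<in> {x\<in>X1. \<not> hd (snd (snd x)) = 0}" using y unfolding X1_def Xn_def by (simp add: X_mem)
    have "s \<noteq> 0" using y(5) cl(2) by simp
    then have "Nn a c l = 3 * a + 4 * c" using Nn_B[OF y(4) cl(4), of c' l'] cl by simp
    then show "fX y = (case y of (a, y) \<Rightarrow> (t ^ 3) ^ a * f4 y)"
      unfolding y fX_def f4_def by (simp add: power_add power_mult[symmetric])
  next
    fix x assume "x \<in> {x\<in>X1. \<not> hd (snd (snd x)) = 0}"
    then obtain a c l where x: "x = (a, c, l)" "(c, l) \<in> Y" "c \<noteq> 0" "a \<noteq> 0" "hd l \<noteq> 0"
      unfolding X1_def Xn_def by (cases x) (auto simp: X_mem)
    show "x \<in> {1::nat..} \<times> Yne" using x unfolding Yne_def Yn_def by simp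
  qed auto
  then show ?thesis using pm by simp
qed

lemma Z_eq: "Z = 1 / (1 - t ^ 3) + ((t ^ 3 * K + (t ^ 3 * K + W2)) + (t ^ 5 * Z + (t ^ 3 / (1 - t ^ 3)) * (t ^ 4 * V + W2)))"
proof -
  have a: "(fX has_sum t ^ 3 * K + (t ^ 3 * K + W2)) X0"
    using has_sum_split[OF Z23(1) has_sum_split[OF Z23(2) Z4, unfolded X0'_def]] .
  have b: "(fX has_sum t ^ 5 * Z + (t ^ 3 / (1 - t ^ 3)) * (t ^ 4 * V + W2)) X1"
    using has_sum_split[OF Z5 Z6] .
  have "(fX has_sum (t ^ 3 * K + (t ^ 3 * K + W2)) + (t ^ 5 * Z + (t ^ 3 / (1 - t ^ 3)) * (t ^ 4 * V + W2))) Xn"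
    using has_sum_split[OF a[unfolded X0_def] b[unfolded X1_def]] .
  then have "(fX has_sum 1 / (1 - t ^ 3) + ((t ^ 3 * K + (t ^ 3 * K + W2)) + (t ^ 5 * Z + (t ^ 3 / (1 - t ^ 3)) * (t ^ 4 * V + W2)))) X"
    using has_sum_split[OF Z1] unfolding Xn_def by blast
  then show ?thesis using HZ has_sum_unique by blast
qed

end


context cdvr_t
begin

lemma alg: "Z * (1 - t ^ 5) * (1 - t ^ 3) * (1 - of_nat q * t ^ 4) = 1 + 2 * t ^ 3 - 2 * t ^ 4 - t ^ 7"
proof -
  have n3: "1 - t ^ 3 \<noteq> 0" using pow_lt[of 3] by auto
  define u where "u = 1 / (1 - t ^ 3)"
  have u: "u * (1 - t ^ 3) = 1" unfolding u_def using n3 by simp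
  have u2: "t ^ 3 / (1 - t ^ 3) = t ^ 3 * u" unfolding u_def by simp
  have nq: "1 - of_nat q * t ^ 4 \<noteq> 0"
  proof
    assume "1 - of_nat q * t ^ 4 = 0"
    then have "of_nat q * t ^ 4 = 1" by simp
    then have "norm (of_nat q * t ^ 4) = 1" by simp
    then show False using qpow_lt[of 4] by (simp add: norm_mult)
  qed
  have v: "V * (1 - of_nat q * t ^ 4) = 1" unfolding V_def using nq by simp
  have ze: "Z = u + ((t ^ 3 * K + (t ^ 3 * K + W2)) + (t ^ 5 * Z + (t ^ 3 * u) * (t ^ 4 * V + W2)))"
    using Z_eq unfolding u_def[symmetric] u2 .
  show ?thesis using ze K_eq V_eq u v by algebra
qed

lemma total: "((\<lambda>((a, c, l), d2, d3, d4). t ^ (Nn a c l + d2 + d3 + d4)) has_sum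
   (1 + 2 * t ^ 3 - 2 * t ^ 4 - t ^ 7) /
     ((1 - t) ^ 3 * (1 - t ^ 3) * (1 - t ^ 5) * (1 - of_nat q * t ^ 4))) T"
proof -
  have g: "((\<lambda>n. t ^ n) has_sum 1 / (1 - t)) UNIV" using r_lt by (rule has_sum_geo)
  have h0: "((\<lambda>(x, y). fX x * (case y of (d2, y) \<Rightarrow> t ^ d2 * (case y of (d3, d4) \<Rightarrow> t ^ d3 * t ^ d4)))
     has_sum Z * (1 / (1 - t) * (1 / (1 - t) * (1 / (1 - t))))) (X \<times> (UNIV \<times> (UNIV \<times> UNIV)))"
    by (rule has_sum_prod_mult[OF HZ has_sum_prod_mult[OF g has_sum_prod_mult[OF g g]]])
  have h: "((\<lambda>((a, c, l), d2, d3, d4). t ^ (Nn a c l + d2 + d3 + d4))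
     has_sum Z * (1 / (1 - t) * (1 / (1 - t) * (1 / (1 - t))))) (X \<times> (UNIV \<times> (UNIV \<times> UNIV)))"
    using h0 by (rule has_sum_cong[THEN iffD1, rotated]) (auto simp: fX_def power_add)
  have n1: "1 - t \<noteq> 0" using r_lt by auto
  have n3: "1 - t ^ 3 \<noteq> 0" using pow_lt[of 3] by auto
  have n5: "1 - t ^ 5 \<noteq> 0" using pow_lt[of 5] by auto
  have nq: "1 - of_nat q * t ^ 4 \<noteq> 0"
  proof
    assume "1 - of_nat q * t ^ 4 = 0"
    then have "of_nat q * t ^ 4 = 1" by simp
    then have "norm (of_nat q * t ^ 4) = 1" by simp
    then show False using qpow_lt[of 4] by (simp add: norm_mult)
  qed
  have D: "(1 - t ^ 5) * (1 - t ^ 3) * (1 - of_nat q * t ^ 4) \<noteq> 0" using n3 n5 nq by simp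
  have "Z = (1 + 2 * t ^ 3 - 2 * t ^ 4 - t ^ 7) / ((1 - t ^ 5) * (1 - t ^ 3) * (1 - of_nat q * t ^ 4))"
    using alg D by (simp add: eq_divide_eq mult.assoc)
  then have val: "Z * (1 / (1 - t) * (1 / (1 - t) * (1 / (1 - t)))) = (1 + 2 * t ^ 3 - 2 * t ^ 4 - t ^ 7) /
     ((1 - t) ^ 3 * (1 - t ^ 3) * (1 - t ^ 5) * (1 - of_nat q * t ^ 4))"
    by (simp add: power3_eq_cube mult_ac)
  have "X \<times> (UNIV \<times> (UNIV \<times> UNIV)) = T" unfolding T_def X_def by simp
  then show ?thesis using h val by simp
qed

end

lemma powr_nat_pow: fixes q :: nat and w :: complex assumes "0 < q"
  shows "((of_nat q :: complex) ^ n) powr w = (of_nat q powr w) ^ n"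
proof -
  have "(of_nat q :: complex) ^ n = of_nat (q ^ n)" by simp
  then have "((of_nat q :: complex) ^ n) powr w = of_nat (q ^ n) powr w" by simp
  also have "of_nat (q ^ n) powr w = (of_nat q powr w) ^ n"
  proof -
  have "of_nat (q ^ n) powr w = exp (w * Ln (of_nat (q ^ n)))" using assms by (simp add: powr_def)
  also have "Ln (of_nat (q ^ n)) = of_nat n * Ln (of_nat q)"
  proof -
    have "Ln (of_nat (q ^ n) :: complex) = of_real (ln (of_nat (q ^ n)))"
      by (rule Ln_of_nat) (use assms in simp)
    also have "\<dots> = of_nat n * Ln (of_nat q)" using assms by (simp add: ln_realpow)
    finally show ?thesis .
  qed
  also have "exp (w * (of_nat n * Ln (of_nat q))) = exp (w * Ln (of_nat q)) ^ n"
    by (metis exp_of_nat_mult mult.left_commute)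
  also have "exp (w * Ln (of_nat q)) = of_nat q powr w" using assms by (simp add: powr_def)
  finally show ?thesis .
  qed
  finally show ?thesis .
qed

theorem proposition3p10:
  fixes p :: "'a::idom" and q :: nat
  assumes "compact_dvr_uniformizer p"
    and "q = residue_card p"
  shows "\<exists>s0::real. \<forall>s::complex. Re s > s0 \<longrightarrow>
    (let t = (of_nat q :: complex) powr (- s) in
     ((\<lambda>W::('a \<times> 'a) set \<times> 'a set \<times> 'a set \<times> 'a set.
          (of_nat (subrep_index W) :: complex) powr (- s))
       has_sum ((1 + 2 * t ^ 3 - 2 * t ^ 4 - t ^ 7) /
                ((1 - t) ^ 3 * (1 - t ^ 3) * (1 - t ^ 5) * (1 - of_nat q * t ^ 4))))
       subreps_V)"
proof (intro exI[of _ 1] allI impI)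
  fix s :: complex assume s: "1 < Re s"
  interpret cdvr p using assms(1) unfolding compact_dvr_uniformizer_def by unfold_locales auto
  define t where "t = (of_nat q :: complex) powr (- s)"
  have q2: "2 \<le> q" using q_ge2 assms(2) by simp
  have nt: "norm t = real q powr (- Re s)" unfolding t_def
    by (subst norm_powr_real_powr) auto
  have "real q * real q powr (- Re s) = real q powr (1 - Re s)"
    using q2 by (simp add: powr_diff powr_minus divide_inverse)
  also have "\<dots> < 1" using q2 s by (intro powr_less_one) auto
  finally have tq: "of_nat (residue_card p) * norm t < 1" using nt assms(2) by simp
  interpret cdvr_t p t by unfold_locales (rule tq)
  have "((\<lambda>x. of_nat (subrep_index (Phi x)) powr (- s)) has_sum
     (1 + 2 * t ^ 3 - 2 * t ^ 4 - t ^ 7) / ((1 - t) ^ 3 * (1 - t ^ 3) * (1 - t ^ 5) * (1 - of_nat q * t ^ 4))) T"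
  proof -
    have eq: "of_nat (subrep_index (Phi ((a, c, l), d2, d3, d4))) powr (- s) = t ^ (Nn a c l + d2 + d3 + d4)"
      for a c l d2 d3 d4
      unfolding Phi_index t_def using q2 assms(2) by (simp add: powr_nat_pow)
    have tot: "((\<lambda>((a, c, l), d2, d3, d4). t ^ (Nn a c l + d2 + d3 + d4)) has_sum
     (1 + 2 * t ^ 3 - 2 * t ^ 4 - t ^ 7) / ((1 - t) ^ 3 * (1 - t ^ 3) * (1 - t ^ 5) * (1 - of_nat q * t ^ 4))) T"
      using total assms(2) by simp
    show ?thesis
      by (rule has_sum_cong[THEN iffD1, OF _ tot]) (auto simp: eq)
  qed
  then have "((\<lambda>W::('a \<times> 'a) set \<times> 'a set \<times> 'a set \<times> 'a set. of_nat (subrep_index W) powr (- s)) has_sum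
     (1 + 2 * t ^ 3 - 2 * t ^ 4 - t ^ 7) / ((1 - t) ^ 3 * (1 - t ^ 3) * (1 - t ^ 5) * (1 - of_nat q * t ^ 4))) subreps_V"
    using has_sum_reindex_bij_betw[OF Phi_bij] by blast
  then show "let t = (of_nat q :: complex) powr (- s) in
     ((\<lambda>W::('a \<times> 'a) set \<times> 'a set \<times> 'a set \<times> 'a set.
          (of_nat (subrep_index W) :: complex) powr (- s))
       has_sum ((1 + 2 * t ^ 3 - 2 * t ^ 4 - t ^ 7) /
                ((1 - t) ^ 3 * (1 - t ^ 3) * (1 - t ^ 5) * (1 - of_nat q * t ^ 4))))
       subreps_V" unfolding t_def Let_def .
qed


end
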